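(* Let $n\in\mathbb{N}$, $\mathcal H\in C^2(\mathbb{R}^{2n})$, and consider $\dot x=J_{2n}\nabla\mathcal H(x)$ with flow $\Phi^t$. Let $K\subset\mathbb{R}^{2n}$ be nonempty, compact and forward invariant for times in $[0,T]$ with $T\in(0,\infty]$, i.e. $\Phi^t(K)\subset K$ for all $t\in[0,T]$. Let $L_K:=\sup_{y\in K}\|\nabla^2\mathcal H(y)\|_2<\infty$ and $\Delta T_K^\star:=\min\{T,\ \log 2/L_K\}$ (with $\log2/L_K:=+\infty$ if $L_K=0$). Then for every fixed $\Delta T$ with $0<\Delta T<\Delta T_K^\star$: for every $x\in K$ the lower-right block $\mathbf D(x)=\partial_p\mathbf P(x)$ of $D\Phi^{\Delta T}(x)$ is invertible; and on any $(q,P)$-chart $(U,\psi)$ with $U\cap K\ne\emptyset$ whose coordinate image $W:=\psi(U)$ is simply connected, $\mathbf D$ is invertible on $U$, $\psi$ is a diffeomorphism onto the simply connected open set $W$, and there exists a generating function $S$ on $W$ such that, with $\mathbf p,\mathbf Q$ viewed as functions of $(q,P)$ (i.e. $(q,\mathbf p(q,P))=\psi^{-1}(q,P)$, $\mathbf Q(q,P)=\mathbf Q(q,\mathbf p(q,P))$), \[ \mathbf p(q,P)=\partial_qS(q,P),\qquad \mathbf Q(q,P)=\partial_PS(q,P), \] and $S^{\Delta T}(q,P):=\frac1{\Delta T}(S(q,P)-q^\top P)$ satisfies $J_{2n}^\top\frac{\Phi^{\Delta T}(x)-x}{\Delta T}=\nabla_{(q,P)}S^{\Delta T}(I_1x+I_2\Phi^{\Delta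 T}(x))$ for all $x\in U$; these statements hold for all $x\in K$ and all $0<\Delta T<\Delta T_K^\star$.
   Context: $J_{2n}=\begin{bmatrix}0_n&I_n\\-I_n&0_n\end{bmatrix}$, $I_1=\begin{bmatrix}I_n&0\\0&0\end{bmatrix}$, $I_2=\begin{bmatrix}0&0\\0&I_n\end{bmatrix}$. Write $\Phi^{\Delta T}(q,p)=(\mathbf Q(q,p),\mathbf P(q,p))$ with $x=(q,p)\in\mathbb{R}^n\times\mathbb{R}^n$, and $D\Phi^{\Delta T}=\begin{pmatrix}\mathbf A&\mathbf B\\\mathbf C&\mathbf D\end{pmatrix}$ in $n\times n$ blocks. A $(q,P)$-chart $(U,\psi)$ is an open set $U\subset\mathbb{R}^{2n}$ on which $\Phi^{\Delta T}$ is defined, together with the map $\psi(q,p):=(q,\mathbf P(q,p))$, which is a diffeomorphism from $U$ onto the open set $\psi(U)$. *)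

theory Defs
  imports "HOL-Analysis.Analysis"
begin

text \<open>Phase space R^{2n} is modelled as R^n x R^n, points x = (q,p).\<close>

type_synonym 'n phase = "(real^'n) \<times> (real^'n)"

definition Jmat :: "('n::finite) phase \<Rightarrow> ('n::finite) phase" where
  "Jmat x = (snd x, - fst x)"

definition JmatT :: "('n::finite) phase \<Rightarrow> ('n::finite) phase" where
  "JmatT x = (- snd x, fst x)"

definition I1 :: "('n::finite) phase \<Rightarrow> ('n::finite) phase" where
  "I1 x = (fst x, 0)"

definition I2 :: "('n::finite) phase \<Rightarrow> ('n::finite) phase" where
  "I2 x = (0, snd x)"

definition has_gradient :: "('a::real_inner \<Rightarrow> real) \<Rightarrow> 'a \<Rightarrow> 'a \<Rightarrow> bool" where
  "has_gradient f g x \<longleftrightarrow> (f has_derivative (\<lambda>h. g \<bullet> h)) (at x)"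

definition ham_vf :: "(('n::finite) phase \<Rightarrow> ('n::finite) phase) \<Rightarrow> ('n::finite) phase \<Rightarrow> ('n::finite) phase" where
  "ham_vf gH x = Jmat (gH x)"

definition flow_exists :: "('a::real_normed_vector \<Rightarrow> 'a) \<Rightarrow> real \<Rightarrow> 'a \<Rightarrow> bool" where
  "flow_exists F t x \<longleftrightarrow> 0 \<le> t \<and> (\<exists>\<gamma>. \<gamma> 0 = x \<and>
      (\<forall>s\<in>{0..t}. (\<gamma> has_vector_derivative F (\<gamma> s)) (at s within {0..t})))"

definition flow :: "('a::real_normed_vector \<Rightarrow> 'a) \<Rightarrow> real \<Rightarrow> 'a \<Rightarrow> 'a" where
  "flow F t x = (THE y. \<exists>\<gamma>. \<gamma> 0 = x \<and>
      (\<forall>s\<in>{0..t}. (\<gamma> has_vector_derivative F (\<gamma> s)) (at s within {0..t})) \<and> \<gamma> t = y)"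

definition hess_bound :: "('a \<Rightarrow> 'b::real_normed_vector) \<Rightarrow> 'a set \<Rightarrow> real" where
  "hess_bound Hess K = (SUP y\<in>K. norm (Hess y))"

definition step_bound :: "ereal \<Rightarrow> real \<Rightarrow> ereal" where
  "step_bound T L = min T (if L = 0 then \<infinity> else ereal (ln 2 / L))"

definition lower_block :: "(('n::finite) phase \<Rightarrow> ('n::finite) phase) \<Rightarrow> real^'n \<Rightarrow> real^'n" where
  "lower_block A v = snd (A (0, v))"

definition lower_block_invertible_at :: "(('n::finite) phase \<Rightarrow> ('n::finite) phase) \<Rightarrow> ('n::finite) phase \<Rightarrow> bool" where
  "lower_block_invertible_at \<Phi> x \<longleftrightarrow>
     (\<exists>A. (\<Phi> has_derivative A) (at x) \<and> bij (lower_block A))"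

definition diffeo_on :: "'a::real_normed_vector set \<Rightarrow> 'b::real_normed_vector set \<Rightarrow> ('a \<Rightarrow> 'b) \<Rightarrow> bool" where
  "diffeo_on U V g \<longleftrightarrow> g ` U = V \<and> inj_on g U \<and> g differentiable_on U \<and>
      (inv_into U g) differentiable_on V"

definition qP_map :: "(('n::finite) phase \<Rightarrow> ('n::finite) phase) \<Rightarrow> ('n::finite) phase \<Rightarrow> ('n::finite) phase" where
  "qP_map \<Phi> x = (fst x, snd (\<Phi> x))"

definition qP_chart :: "(('n::finite) phase \<Rightarrow> ('n::finite) phase) \<Rightarrow> real \<Rightarrow> ('n::finite) phase set \<Rightarrow> bool" where
  "qP_chart F dt U \<longleftrightarrow> open U \<and> (\<forall>x\<in>U. flow_exists F dt x) \<and>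
      open (qP_map (flow F dt) ` U) \<and> diffeo_on U (qP_map (flow F dt) ` U) (qP_map (flow F dt))"

end

theory Submission
  imports Defs "HOL-Analysis.Analysis"
begin

lemma gronwall:
  fixes u :: "real \<Rightarrow> real"
  assumes t: "0 \<le> t" and L: "0 < L" and cu: "continuous_on {0..t} u"
    and le: "\<And>s. s \<in> {0..t} \<Longrightarrow> u s \<le> a + L * integral {0..s} u"
    and s: "s \<in> {0..t}"
  shows "u s \<le> a * exp (L * s)"
proof -
  define v where "v r = integral {0..r} u" for r
  have vd: "(v has_real_derivative u r) (at r within {0..t})" if "r \<in> {0..t}" for r
    using integral_has_vector_derivative[OF cu that] unfolding v_def
    by (simp add: has_real_derivative_iff_has_vector_derivative)
  define g where "g r = exp (-L*r) * (v r + a/L)" for r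
  define g' where "g' r = exp (-L*r) * (u r - L * v r - a)" for r
  have gd: "(g has_real_derivative g' r) (at r within {0..s})" if "r \<in> {0..s}" for r
  proof -
    have r: "r \<in> {0..t}" using that s by auto
    have "(v has_real_derivative u r) (at r within {0..s})"
      by (rule DERIV_subset[OF vd[OF r]]) (use s in auto)
    then have "(g has_real_derivative (-L * exp (-L*r)) * (v r + a/L) + exp (-L*r) * u r) (at r within {0..s})"
      unfolding g_def by (auto intro!: derivative_eq_intros)
    moreover have "(-L * exp (-L*r)) * (v r + a/L) + exp (-L*r) * u r = g' r"
      using L unfolding g'_def by (simp add: field_simps)
    ultimately show ?thesis by simp
  qed
  have s0: "0 \<le> s" using s by auto
  obtain x where x: "x \<in> {0..s}" and eq: "g s - g 0 = (\<lambda>h. h * g' x) (s - 0)"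
    using mvt_very_simple[OF s0, of g "\<lambda>r h. h * g' r"] gd
    by (auto simp: has_real_derivative_iff_has_vector_derivative has_vector_derivative_def mult.commute)
  have "u x \<le> a + L * v x" using le[of x] x s unfolding v_def by auto
  then have "g' x \<le> 0" unfolding g'_def by (simp add: mult_nonneg_nonpos)
  then have "g s \<le> g 0" using eq s0 mult_nonneg_nonpos[of s "g' x"] by simp
  moreover have "g 0 = a / L" unfolding g_def v_def by simp
  ultimately have "exp (- L * s) * (v s + a / L) \<le> a / L" unfolding g_def by simp
  then have "v s + a/L \<le> a/L * exp (L * s)"
    by (simp add: exp_minus field_simps)
  then have "L * (v s + a/L) \<le> L * (a/L * exp (L * s))" using L by (intro mult_left_mono) auto
  then have "L * (v s + a/L) = L * v s + a" "L * (a/L * exp (L * s)) = a * exp (L * s)" using L by (auto simp: field_simps)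
  then have "L * v s \<le> a * exp (L * s) - a" using \<open>L * (v s + a/L) \<le> L * (a/L * exp (L * s))\<close> by linarith
  with le[OF s] show ?thesis unfolding v_def by simp
qed

definition sol :: "(real \<Rightarrow> 'a::real_normed_vector \<Rightarrow> 'a) \<Rightarrow> real \<Rightarrow> (real \<Rightarrow> 'a) \<Rightarrow> bool" where
  "sol f t \<gamma> \<longleftrightarrow> (\<forall>s\<in>{0..t}. (\<gamma> has_vector_derivative f s (\<gamma> s)) (at s within {0..t}))"

lemma sol_cont: "sol f t \<gamma> \<Longrightarrow> continuous_on {0..t} \<gamma>"
  unfolding sol_def continuous_on_eq_continuous_within
  using has_vector_derivative_continuous by blast

lemma sol_subset: "sol f t \<gamma> \<Longrightarrow> s \<le> t \<Longrightarrow> sol f s \<gamma>"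
  unfolding sol_def
  by (meson atLeastAtMost_iff atLeastatMost_subset_iff has_vector_derivative_within_subset order_refl order_trans)

lemma sol_has_integral:
  fixes f :: "real \<Rightarrow> 'a::banach \<Rightarrow> 'a"
  assumes "sol f t \<gamma>" "s \<in> {0..t}"
  shows "((\<lambda>r. f r (\<gamma> r)) has_integral (\<gamma> s - \<gamma> 0)) {0..s}"
proof -
  have "sol f s \<gamma>" using sol_subset assms by auto
  then show ?thesis using assms(2)
    by (intro fundamental_theorem_of_calculus) (auto simp: sol_def)
qed

lemma sol_integral:
  fixes f :: "real \<Rightarrow> 'a::banach \<Rightarrow> 'a"
  assumes "sol f t \<gamma>" "s \<in> {0..t}"
  shows "(\<lambda>r. f r (\<gamma> r)) integrable_on {0..s}" "\<gamma> s = \<gamma> 0 + integral {0..s} (\<lambda>r. f r (\<gamma> r))"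
  using sol_has_integral[OF assms] by (auto simp: integral_unique has_integral_integrable)

lemma gronwall_sol:
  fixes f :: "real \<Rightarrow> 'a::euclidean_space \<Rightarrow> 'a"
  assumes s1: "sol f t \<gamma>1" and s2: "sol f t \<gamma>2" and L: "0 < L"
    and lip: "\<And>s. s \<in> {0..t} \<Longrightarrow> norm (f s (\<gamma>1 s) - f s (\<gamma>2 s)) \<le> L * norm (\<gamma>1 s - \<gamma>2 s)"
    and s: "s \<in> {0..t}"
  shows "norm (\<gamma>1 s - \<gamma>2 s) \<le> norm (\<gamma>1 0 - \<gamma>2 0) * exp (L * s)"
proof -
  define u where "u r = norm (\<gamma>1 r - \<gamma>2 r)" for r
  have t: "0 \<le> t" using s by auto
  have cu: "continuous_on {0..t} u" unfolding u_def
    using sol_cont[OF s1] sol_cont[OF s2] by (intro continuous_intros)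
  have "u r \<le> norm (\<gamma>1 0 - \<gamma>2 0) + L * integral {0..r} u" if r: "r \<in> {0..t}" for r
  proof -
    have i1: "(\<lambda>r. f r (\<gamma>1 r)) integrable_on {0..r}" and e1: "\<gamma>1 r = \<gamma>1 0 + integral {0..r} (\<lambda>r. f r (\<gamma>1 r))"
      using sol_integral[OF s1 r] by auto
    have i2: "(\<lambda>r. f r (\<gamma>2 r)) integrable_on {0..r}" and e2: "\<gamma>2 r = \<gamma>2 0 + integral {0..r} (\<lambda>r. f r (\<gamma>2 r))"
      using sol_integral[OF s2 r] by auto
    have sub: "{0..r} \<subseteq> {0..t}" using r by auto
    have cu': "continuous_on {0..r} u" using continuous_on_subset[OF cu sub] .
    have "\<gamma>1 r - \<gamma>2 r = (\<gamma>1 0 - \<gamma>2 0) + integral {0..r} (\<lambda>r. f r (\<gamma>1 r) - f r (\<gamma>2 r))"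
      using e1 e2 i1 i2 by (simp add: integral_diff)
    then have "u r \<le> norm (\<gamma>1 0 - \<gamma>2 0) + norm (integral {0..r} (\<lambda>r. f r (\<gamma>1 r) - f r (\<gamma>2 r)))"
      unfolding u_def by (metis norm_triangle_ineq)
    also have "norm (integral {0..r} (\<lambda>r. f r (\<gamma>1 r) - f r (\<gamma>2 r))) \<le> integral {0..r} (\<lambda>r. L * u r)"
      apply (rule integral_norm_bound_integral)
      using i1 i2 apply (rule integrable_diff)
      using cu' apply (intro integrable_continuous_real continuous_intros)
      using lip sub unfolding u_def by auto
    also have "integral {0..r} (\<lambda>r. L * u r) = L * integral {0..r} u" by simp
    finally show ?thesis by simp
  qed
  from gronwall[OF t L cu this s] show ?thesis unfolding u_def .
qed

lemma unique_sol:
  fixes f :: "real \<Rightarrow> 'a::euclidean_space \<Rightarrow> 'a"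
  assumes s1: "sol f t \<gamma>1" and s2: "sol f t \<gamma>2" and L: "0 < L"
    and lip: "\<And>s. s \<in> {0..t} \<Longrightarrow> norm (f s (\<gamma>1 s) - f s (\<gamma>2 s)) \<le> L * norm (\<gamma>1 s - \<gamma>2 s)"
    and e: "\<gamma>1 0 = \<gamma>2 0" and s: "s \<in> {0..t}"
  shows "\<gamma>1 s = \<gamma>2 s"
  using gronwall_sol[OF s1 s2 L lip s] e by simp

lemma has_integral_pow0:
  assumes "0 \<le> s"
  shows "((\<lambda>r::real. r^k) has_integral (s^Suc k / Suc k)) {0..s}"
proof -
  have "((\<lambda>r::real. r^k) has_integral ((\<lambda>r. r^Suc k / Suc k) s - (\<lambda>r. r^Suc k / Suc k) 0)) {0..s}"
    apply (rule fundamental_theorem_of_calculus[OF assms])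
    unfolding has_real_derivative_iff_has_vector_derivative[symmetric]
    apply (auto intro!: derivative_eq_intros simp del: of_nat_Suc)
    by (cases k) (auto simp: field_simps)
  then show ?thesis by simp
qed

lemma sum_exp_le:
  assumes "0 \<le> (y::real)"
  shows "(\<Sum>j<k. y^j / fact j) \<le> exp y"
proof -
  have "(\<lambda>n. y^n / fact n) sums exp y" using exp_converges[of y] by (simp add: divide_inverse_commute scaleR_conv_of_real)
  then have "sum (\<lambda>n. y^n / fact n) {..<k} \<le> suminf (\<lambda>n. y^n / fact n)"
    by (intro sum_le_suminf) (auto simp: sums_summable assms)
  then show ?thesis using \<open>(\<lambda>n. y^n / fact n) sums exp y\<close> sums_unique by fastforce
qed

lemma cont_comp_f:
  fixes f :: "real \<Rightarrow> 'a::topological_space \<Rightarrow> 'b::topological_space"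
  assumes cf: "continuous_on ({0..t} \<times> UNIV) (\<lambda>(s,y). f s y)" and cg: "continuous_on {0..t} g"
  shows "continuous_on {0..t} (\<lambda>r. f r (g r))"
proof -
  have "continuous_on {0..t} ((\<lambda>(s,y). f s y) \<circ> (\<lambda>r. (r, g r)))"
    apply (rule continuous_on_compose)
     apply (intro continuous_intros cg)
    apply (rule continuous_on_subset[OF cf]) by auto
  then show ?thesis by (simp add: o_def)
qed

primrec pic :: "(real \<Rightarrow> 'a::banach \<Rightarrow> 'a) \<Rightarrow> 'a \<Rightarrow> (real \<Rightarrow> 'a) \<Rightarrow> nat \<Rightarrow> real \<Rightarrow> 'a" where
  "pic f x w 0 = w"
| "pic f x w (Suc k) = (\<lambda>s. x + integral {0..s} (\<lambda>r. f r (pic f x w k r)))"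

lemma picard:
  fixes f :: "real \<Rightarrow> 'a::euclidean_space \<Rightarrow> 'a"
  assumes t: "0 \<le> t" and L: "0 < L"
   and cw: "continuous_on {0..t} w"
   and cf: "continuous_on ({0..t} \<times> UNIV) (\<lambda>(s,y). f s y)"
   and lip: "\<And>s y1 y2. s \<in> {0..t} \<Longrightarrow> norm (y1 - w s) \<le> R \<Longrightarrow> norm (y2 - w s) \<le> R \<Longrightarrow>
               norm (f s y1 - f s y2) \<le> L * norm (y1 - y2)"
   and dfc: "\<And>s. s \<in> {0..t} \<Longrightarrow> norm (x + integral {0..s} (\<lambda>r. f r (w r)) - w s) \<le> d"
   and R: "d * exp (L * t) \<le> R"
  shows "\<exists>\<gamma>. sol f t \<gamma> \<and> \<gamma> 0 = x \<and> (\<forall>s\<in>{0..t}. norm (\<gamma> s - w s) \<le> d * exp (L * t))"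
proof -
  define g where "g = pic f x w"
  have d0: "0 \<le> d" using dfc[of 0] t by (meson atLeastAtMost_iff norm_ge_zero order.trans order_refl)
  have tube: "norm (y - w s) \<le> R" if "s \<in> {0..t}" "norm (y - w s) \<le> d * (\<Sum>j<k. (L * s)^j / fact j)" for y s k
  proof -
    have "(\<Sum>j<k. (L * s)^j / fact j) \<le> exp (L * s)" using sum_exp_le[of "L * s" k] L that(1) by auto
    also have "\<dots> \<le> exp (L * t)" using L that(1) by auto
    finally show ?thesis using that(2) d0 R by (meson mult_left_mono order_trans)
  qed
  have P: "continuous_on {0..t} (g k) \<and> (\<forall>s\<in>{0..t}. norm (g k s - w s) \<le> d * (\<Sum>j<k. (L * s)^j / fact j))
       \<and> (\<forall>s\<in>{0..t}. norm (g (Suc k) s - g k s) \<le> d * (L * s)^k / fact k)" for k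
  proof (induction k)
    case 0
    then show ?case using cw dfc by (simp add: g_def)
  next
    case (Suc k)
    have ck: "continuous_on {0..t} (\<lambda>r. f r (g k r))" using Suc cont_comp_f[OF cf] by blast
    have c1: "continuous_on {0..t} (g (Suc k))"
      unfolding g_def pic.simps
      by (intro continuous_intros indefinite_integral_continuous_1 integrable_continuous_real) (use ck g_def in auto)
    have ck1: "continuous_on {0..t} (\<lambda>r. f r (g (Suc k) r))" using c1 cont_comp_f[OF cf] by blast
    have tb: "\<forall>s\<in>{0..t}. norm (g (Suc k) s - w s) \<le> d * (\<Sum>j<Suc k. (L * s)^j / fact j)"
    proof
      fix s assume s: "s \<in> {0..t}"
      have "norm (g (Suc k) s - w s) \<le> norm (g (Suc k) s - g k s) + norm (g k s - w s)"
        by (metis diff_add_cancel norm_triangle_ineq add_diff_eq)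
      also have "\<dots> \<le> d * (L * s)^k / fact k + d * (\<Sum>j<k. (L * s)^j / fact j)"
        using Suc s by (intro add_mono) auto
      also have "\<dots> = d * (\<Sum>j<Suc k. (L * s)^j / fact j)" by (simp add: algebra_simps)
      finally show "norm (g (Suc k) s - w s) \<le> d * (\<Sum>j<Suc k. (L * s)^j / fact j)" .
    qed
    have df: "\<forall>s\<in>{0..t}. norm (g (Suc (Suc k)) s - g (Suc k) s) \<le> d * (L * s)^Suc k / fact (Suc k)"
    proof
      fix s assume s: "s \<in> {0..t}"
      have sub: "{0..s} \<subseteq> {0..t}" using s by auto
      have i0: "(\<lambda>r. f r (g k r)) integrable_on {0..s}"
        using integrable_continuous_real continuous_on_subset[OF ck sub] by blast
      have i1: "(\<lambda>r. f r (g (Suc k) r)) integrable_on {0..s}"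
        using integrable_continuous_real continuous_on_subset[OF ck1 sub] by blast
      have "g (Suc (Suc k)) s - g (Suc k) s = integral {0..s} (\<lambda>r. f r (g (Suc k) r)) - integral {0..s} (\<lambda>r. f r (g k r))"
        by (simp add: g_def)
      also have "\<dots> = integral {0..s} (\<lambda>r. f r (g (Suc k) r) - f r (g k r))"
        using integral_diff[OF i1 i0] by simp
      finally have eq1: "g (Suc (Suc k)) s - g (Suc k) s = integral {0..s} (\<lambda>r. f r (g (Suc k) r) - f r (g k r))" .
      have "norm (integral {0..s} (\<lambda>r. f r (g (Suc k) r) - f r (g k r))) \<le> integral {0..s} (\<lambda>r. (L * d * L^k / fact k) * r^k)"
      proof (rule integral_norm_bound_integral)
        show "(\<lambda>r. f r (g (Suc k) r) - f r (g k r)) integrable_on {0..s}" using i1 i0 by (rule integrable_diff)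
        show "(\<lambda>r. (L * d * L^k / fact k) * r^k) integrable_on {0..s}"
          by (intro integrable_continuous_real continuous_intros)
        fix r assume r: "r \<in> {0..s}"
        then have rt: "r \<in> {0..t}" using sub by auto
        have "norm (f r (g (Suc k) r) - f r (g k r)) \<le> L * norm (g (Suc k) r - g k r)"
          apply (rule lip[OF rt])
           apply (rule tube[OF rt]) using tb rt apply blast
          apply (rule tube[OF rt]) using Suc rt by blast
        also have "\<dots> \<le> L * (d * (L * r)^k / fact k)" using Suc rt L by (intro mult_left_mono) auto
        also have "\<dots> = (L * d * L^k / fact k) * r^k" by (simp add: power_mult_distrib)
        finally show "norm (f r (g (Suc k) r) - f r (g k r)) \<le> (L * d * L^k / fact k) * r^k" .
      qed
      also have "\<dots> = (L * d * L^k / fact k) * (s^Suc k / Suc k)"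
      proof -
        have "integral {0..s} (\<lambda>r::real. r^k) = s^Suc k / Suc k"
          using has_integral_pow0[of s k] s by (auto intro: integral_unique)
        then show ?thesis by simp
      qed
      also have "\<dots> = d * (L * s)^Suc k / fact (Suc k)"
        by (simp add: power_mult_distrib field_simps del: of_nat_Suc)
      finally show "norm (g (Suc (Suc k)) s - g (Suc k) s) \<le> d * (L * s)^Suc k / fact (Suc k)" unfolding eq1 .
    qed
    show ?case using c1 tb df by blast
  qed
  define M where "M i = d * (L * t)^i / fact i" for i
  have Msums: "M sums (d * exp (L * t))"
    unfolding M_def using sums_mult[OF exp_converges[of "L * t"], of d]
    by (simp add: divide_inverse_commute scaleR_conv_of_real mult_ac)
  have Mb: "norm (g (Suc i) s - g i s) \<le> M i" if "s \<in> {0..t}" for i s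
  proof -
    have "(L * s)^i \<le> (L * t)^i" using that L by (intro power_mono) auto
    then have "d * (L * s)^i / fact i \<le> d * (L * t)^i / fact i" using d0
      by (intro divide_right_mono mult_left_mono) auto
    then show ?thesis using P[of i] that unfolding M_def by force
  qed
  define \<gamma> where "\<gamma> s = w s + (\<Sum>i. g (Suc i) s - g i s)" for s
  have ul0: "uniform_limit {0..t} (\<lambda>n s. \<Sum>i<n. g (Suc i) s - g i s) (\<lambda>s. \<Sum>i. g (Suc i) s - g i s) sequentially"
    by (rule Weierstrass_m_test[OF Mb sums_summable[OF Msums]])
  have ul: "uniform_limit {0..t} g \<gamma> sequentially"
  proof -
    have "uniform_limit {0..t} (\<lambda>n s. w s + (\<Sum>i<n. g (Suc i) s - g i s)) \<gamma> sequentially"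
      unfolding \<gamma>_def by (intro uniform_limit_add ul0 uniform_limit_const)
    moreover have "w s + (\<Sum>i<n. g (Suc i) s - g i s) = g n s" for n s
      by (subst sum_lessThan_telescope[where f = "\<lambda>i. g i s"]) (simp add: g_def)
    ultimately show ?thesis by simp
  qed
  have cg: "continuous_on {0..t} \<gamma>"
    by (rule uniform_limit_theorem[OF _ ul]) (use P in auto)
  have tg: "norm (\<gamma> s - w s) \<le> d * exp (L * t)" if "s \<in> {0..t}" for s
  proof -
    have "norm (\<Sum>i. g (Suc i) s - g i s) \<le> suminf M"
      by (rule norm_suminf_le[OF Mb[OF that] sums_summable[OF Msums]])
    then show ?thesis using sums_unique[OF Msums] unfolding \<gamma>_def by simp
  qed
  have cfg: "continuous_on {0..t} (\<lambda>r. f r (\<gamma> r))" using cont_comp_f[OF cf cg] .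
  have eq: "\<gamma> s = x + integral {0..s} (\<lambda>r. f r (\<gamma> r))" if s: "s \<in> {0..t}" for s
  proof -
    have sub: "{0..s} \<subseteq> {0..t}" using s by auto
    have l1: "(\<lambda>n. g (Suc n) s) \<longlonglongrightarrow> \<gamma> s"
      using tendsto_uniform_limitI[OF ul s] by (rule LIMSEQ_Suc)
    have ul2: "uniform_limit {0..s} (\<lambda>n r. f r (g n r)) (\<lambda>r. f r (\<gamma> r)) sequentially"
    proof (rule uniform_limitI)
      fix e :: real assume e: "0 < e"
      have "\<forall>\<^sub>F n in sequentially. \<forall>r\<in>{0..t}. dist (g n r) (\<gamma> r) < e / L"
        using uniform_limitD[OF ul] e L by auto
      then show "\<forall>\<^sub>F n in sequentially. \<forall>r\<in>{0..s}. dist (f r (g n r)) (f r (\<gamma> r)) < e"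
      proof eventually_elim
        case (elim n)
        show ?case
        proof
          fix r assume r: "r \<in> {0..s}"
          then have rt: "r \<in> {0..t}" using sub by auto
          have "norm (f r (g n r) - f r (\<gamma> r)) \<le> L * norm (g n r - \<gamma> r)"
            apply (rule lip[OF rt])
             apply (rule tube[OF rt]) using P rt apply blast
            using tg[OF rt] R by simp
          also have "\<dots> < L * (e / L)" using elim rt L by (intro mult_strict_left_mono) (auto simp: dist_norm)
          finally show "dist (f r (g n r)) (f r (\<gamma> r)) < e" using L by (simp add: dist_norm)
        qed
      qed
    qed
    have cgn: "continuous_on {0..s} (\<lambda>r. f r (g n r))" for n
      using cont_comp_f[OF cf] P continuous_on_subset sub by blast
    obtain I J where I: "\<And>n. ((\<lambda>r. f r (g n r)) has_integral I n) {0..s}"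
      and J: "((\<lambda>r. f r (\<gamma> r)) has_integral J) {0..s}" and IJ: "I \<longlonglongrightarrow> J"
      using uniform_limit_integral[OF ul2 cgn] by auto
    have "(\<lambda>n. g (Suc n) s) = (\<lambda>n. x + I n)"
      using I by (auto simp: g_def integral_unique)
    then have "(\<lambda>n. g (Suc n) s) \<longlonglongrightarrow> x + J" using IJ by (auto intro: tendsto_intros)
    then show ?thesis using l1 J LIMSEQ_unique integral_unique by metis
  qed
  have "sol f t \<gamma>"
    unfolding sol_def
  proof
    fix s assume s: "s \<in> {0..t}"
    have "((\<lambda>s. x + integral {0..s} (\<lambda>r. f r (\<gamma> r))) has_vector_derivative f s (\<gamma> s)) (at s within {0..t})"
      using integral_has_vector_derivative[OF cfg s] by (auto intro!: derivative_eq_intros)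
    then show "(\<gamma> has_vector_derivative f s (\<gamma> s)) (at s within {0..t})"
      by (rule has_vector_derivative_transform[OF s, rotated]) (use eq in auto)
  qed
  moreover have "\<gamma> 0 = x" using eq[of 0] t by simp
  ultimately show ?thesis using tg by blast
qed

lemma bounded_image_cball:
  fixes Df :: "'a::euclidean_space \<Rightarrow> 'c::real_normed_vector"
  assumes "continuous_on UNIV Df"
  shows "\<exists>B>0. \<forall>x\<in>cball c R. norm (Df x) \<le> B"
proof -
  have "compact (Df ` cball c R)"
    by (rule compact_continuous_image) (use assms continuous_on_subset in auto)
  then show ?thesis using compact_imp_bounded bounded_pos by (metis image_eqI)
qed

lemma lip_cball:
  fixes f :: "'a::euclidean_space \<Rightarrow> 'b::real_normed_vector"
  assumes fd: "\<And>x. (f has_derivative blinfun_apply (Df x)) (at x)" and cD: "continuous_on UNIV Df"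
  shows "\<exists>L>0. \<forall>x\<in>cball c R. \<forall>y\<in>cball c R. norm (f x - f y) \<le> L * norm (x - y)"
proof -
  obtain B where B: "B > 0" "\<forall>x\<in>cball c R. norm (Df x) \<le> B" using bounded_image_cball[OF cD] by blast
  have "norm (f x - f y) \<le> B * norm (x - y)" if "x \<in> cball c R" "y \<in> cball c R" for x y
    apply (rule differentiable_bound[of "cball c R" f "\<lambda>x. blinfun_apply (Df x)"])
    using that B fd by (auto simp: norm_blinfun.rep_eq[symmetric] intro: has_derivative_at_withinI)
  then show ?thesis using B by blast
qed

lemma unif_diff:
  fixes f :: "'a::euclidean_space \<Rightarrow> 'b::real_normed_vector"
  assumes fd: "\<And>x. (f has_derivative blinfun_apply (Df x)) (at x)" and cD: "continuous_on UNIV Df"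
    and C: "compact C" and e: "0 < e"
  shows "\<exists>\<rho>>0. \<forall>c\<in>C. \<forall>y. norm (y - c) \<le> \<rho> \<longrightarrow> norm (f y - f c - Df c (y - c)) \<le> e * norm (y - c)"
proof -
  obtain Rc where Rc: "\<forall>x\<in>C. norm x \<le> Rc" using compact_imp_bounded[OF C] bounded_pos by blast
  define K where "K = cball (0::'a) (Rc + 1)"
  have "uniformly_continuous_on K Df"
    by (rule compact_uniformly_continuous) (use cD continuous_on_subset K_def in auto)
  then obtain d where d: "d > 0" "\<forall>x\<in>K. \<forall>x'\<in>K. dist x' x < d \<longrightarrow> dist (Df x') (Df x) < e"
    unfolding uniformly_continuous_on_def using e by blast
  define \<rho> where "\<rho> = min (d/2) 1"
  have \<rho>: "\<rho> > 0" using d by (simp add: \<rho>_def)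
  have "norm (f y - f c - Df c (y - c)) \<le> e * norm (y - c)" if c: "c \<in> C" and y: "norm (y - c) \<le> \<rho>" for c y
  proof -
    have sub: "cball c \<rho> \<subseteq> K"
    proof
      fix u assume "u \<in> cball c \<rho>"
      then have "norm (u - c) \<le> 1" unfolding \<rho>_def by (auto simp: dist_norm norm_minus_commute)
      moreover have "norm c \<le> Rc" using Rc c by auto
      ultimately have "norm u \<le> Rc + 1" by (metis add.commute diff_add_cancel norm_triangle_le add_mono)
      then show "u \<in> K" by (simp add: K_def)
    qed
    have "norm ((\<lambda>u. f u - Df c u) y - (\<lambda>u. f u - Df c u) c) \<le> e * norm (y - c)"
    proof (rule differentiable_bound[of "cball c \<rho>" _ "\<lambda>u. blinfun_apply (Df u - Df c)"])
      show "convex (cball c \<rho>)" by simp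
      fix u assume u: "u \<in> cball c \<rho>"
      show "((\<lambda>u. f u - Df c u) has_derivative blinfun_apply (Df u - Df c)) (at u within cball c \<rho>)"
        by (auto intro!: derivative_eq_intros has_derivative_at_withinI[OF fd] simp: blinfun.diff_left)
      have "u \<in> K" "c \<in> K" using u sub \<rho> by auto
      moreover have "dist u c < d" using u d unfolding \<rho>_def by (auto simp: dist_commute)
      ultimately have "dist (Df u) (Df c) < e" using d by blast
      then show "onorm (blinfun_apply (Df u - Df c)) \<le> e"
        by (simp add: norm_blinfun.rep_eq[symmetric] dist_norm)
    qed (use y \<rho> in \<open>auto simp: dist_norm norm_minus_commute\<close>)
    then show ?thesis by (simp add: blinfun.diff_right algebra_simps)
  qed
  then show ?thesis using \<rho> by blast
qed

locale c1field =
  fixes F :: "'a::euclidean_space \<Rightarrow> 'a" and DF :: "'a \<Rightarrow> 'a \<Rightarrow>\<^sub>L 'a"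
  assumes F_deriv: "\<And>x. (F has_derivative blinfun_apply (DF x)) (at x)"
    and DF_cont: "continuous_on UNIV DF"
begin

lemma F_cont: "continuous_on UNIV F"
  using F_deriv has_derivative_continuous continuous_at_imp_continuous_on by blast

lemma sol_ball: assumes "sol f t \<gamma>" shows "\<exists>R. \<forall>s\<in>{0..t}. \<gamma> s \<in> cball 0 R"
proof -
  have "compact (\<gamma> ` {0..t})" using sol_cont[OF assms] compact_continuous_image by blast
  then obtain R where "\<forall>x\<in>\<gamma> ` {0..t}. norm x \<le> R" using compact_imp_bounded bounded_pos by metis
  then show ?thesis by auto
qed

lemma unique:
  assumes s1: "sol (\<lambda>_. F) t \<gamma>1" and s2: "sol (\<lambda>_. F) t \<gamma>2" and e: "\<gamma>1 0 = \<gamma>2 0" and s: "s \<in> {0..t}"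
  shows "\<gamma>1 s = \<gamma>2 s"
proof -
  obtain R1 where R1: "\<forall>s\<in>{0..t}. \<gamma>1 s \<in> cball 0 R1" using sol_ball[OF s1] by blast
  obtain R2 where R2: "\<forall>s\<in>{0..t}. \<gamma>2 s \<in> cball 0 R2" using sol_ball[OF s2] by blast
  obtain L where L: "L > 0" "\<forall>x\<in>cball 0 (max R1 R2). \<forall>y\<in>cball 0 (max R1 R2). norm (F x - F y) \<le> L * norm (x - y)"
    using lip_cball[OF F_deriv DF_cont] by blast
  show ?thesis
  proof (rule unique_sol[OF s1 s2 L(1) _ e s])
    fix r assume r: "r \<in> {0..t}"
    have "norm (\<gamma>1 r) \<le> R1" "norm (\<gamma>2 r) \<le> R2" using R1 R2 r by auto
    then have "\<gamma>1 r \<in> cball 0 (max R1 R2)" "\<gamma>2 r \<in> cball 0 (max R1 R2)" by auto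
    then show "norm (F (\<gamma>1 r) - F (\<gamma>2 r)) \<le> L * norm (\<gamma>1 r - \<gamma>2 r)" using L(2) by auto
  qed
qed

lemma flow_sol:
  assumes sl: "sol (\<lambda>_. F) t \<gamma>" and s: "s \<in> {0..t}"
  shows "flow F s (\<gamma> 0) = \<gamma> s" "flow_exists F s (\<gamma> 0)"
proof -
  have ss: "sol (\<lambda>_. F) s \<gamma>" using sol_subset[OF sl] s by auto
  show "flow F s (\<gamma> 0) = \<gamma> s"
    unfolding flow_def
  proof (rule the_equality)
    show "\<exists>\<gamma>'. \<gamma>' 0 = \<gamma> 0 \<and> (\<forall>r\<in>{0..s}. (\<gamma>' has_vector_derivative F (\<gamma>' r)) (at r within {0..s})) \<and> \<gamma>' s = \<gamma> s"
      using ss unfolding sol_def by blast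
    fix y assume "\<exists>\<gamma>'. \<gamma>' 0 = \<gamma> 0 \<and> (\<forall>r\<in>{0..s}. (\<gamma>' has_vector_derivative F (\<gamma>' r)) (at r within {0..s})) \<and> \<gamma>' s = y"
    then obtain \<gamma>' where g: "\<gamma>' 0 = \<gamma> 0" "sol (\<lambda>_. F) s \<gamma>'" "\<gamma>' s = y" unfolding sol_def by auto
    show "y = \<gamma> s" using unique[OF g(2) ss g(1)] g(3) s by auto
  qed
  show "flow_exists F s (\<gamma> 0)" unfolding flow_exists_def using ss s unfolding sol_def by auto
qed

lemma flow_exists_sol:
  assumes "flow_exists F t x" shows "\<exists>\<gamma>. sol (\<lambda>_. F) t \<gamma> \<and> \<gamma> 0 = x" "0 \<le> t"
  using assms unfolding flow_exists_def sol_def by auto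

end

locale traj = c1field +
  fixes z :: "real \<Rightarrow> 'a::euclidean_space" and t :: real
  assumes z_sol: "sol (\<lambda>_. F) t z" and t_nonneg: "0 \<le> t"
begin

lemma z_cont: "continuous_on {0..t} z" using sol_cont[OF z_sol] .

lemma near:
  "\<exists>\<delta>>0. \<exists>L>0. \<forall>x. norm (x - z 0) < \<delta> \<longrightarrow> (\<exists>y. sol (\<lambda>_. F) t y \<and> y 0 = x \<and>
      (\<forall>s\<in>{0..t}. norm (y s - z s) \<le> norm (x - z 0) * exp (L * t)))"
proof -
  obtain R0 where R0: "\<forall>s\<in>{0..t}. z s \<in> cball 0 R0" using sol_ball[OF z_sol] by blast
  obtain L where L: "L > 0" "\<forall>x\<in>cball 0 (R0+1). \<forall>y\<in>cball 0 (R0+1). norm (F x - F y) \<le> L * norm (x - y)"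
    using lip_cball[OF F_deriv DF_cont] by blast
  define \<delta> where "\<delta> = exp (- (L * t))"
  have cf: "continuous_on ({0..t} \<times> UNIV) (\<lambda>(s::real, y). F y)"
  proof -
    have "continuous_on ({0..t} \<times> UNIV) (F \<circ> snd)"
      by (intro continuous_on_compose continuous_intros continuous_on_subset[OF F_cont]) auto
    then show ?thesis by (simp add: o_def case_prod_beta')
  qed
  have "\<exists>y. sol (\<lambda>_. F) t y \<and> y 0 = x \<and> (\<forall>s\<in>{0..t}. norm (y s - z s) \<le> norm (x - z 0) * exp (L * t))"
    if x: "norm (x - z 0) < \<delta>" for x
  proof (rule picard[OF t_nonneg L(1) z_cont cf])
    fix s y1 y2 assume s: "s \<in> {0..t}" and y: "norm (y1 - z s) \<le> 1" "norm (y2 - z s) \<le> 1"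
    have "norm (z s) \<le> R0" using R0 s by auto
    then have "norm y1 \<le> R0 + 1" "norm y2 \<le> R0 + 1" using y norm_triangle_sub[of y1 "z s"] norm_triangle_sub[of y2 "z s"]
      by auto
    then show "norm (F y1 - F y2) \<le> L * norm (y1 - y2)" using L(2) by auto
  next
    fix s assume s: "s \<in> {0..t}"
    have "z s = z 0 + integral {0..s} (\<lambda>r. F (z r))" using sol_integral(2)[OF z_sol s] by simp
    then show "norm (x + integral {0..s} (\<lambda>r. F (z r)) - z s) \<le> norm (x - z 0)" by (simp add: algebra_simps)
  next
    have "norm (x - z 0) * exp (L * t) \<le> \<delta> * exp (L * t)" using x by (intro mult_right_mono) auto
    also have "\<dots> = 1" unfolding \<delta>_def by (simp add: exp_minus)
    finally show "norm (x - z 0) * exp (L * t) \<le> 1" .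
  qed
  then show ?thesis using L(1) by (intro exI[of _ \<delta>]) (auto simp: \<delta>_def)
qed

lemma DFz_cont: "continuous_on {0..t} (\<lambda>s. DF (z s))"
  using continuous_on_compose2[OF DF_cont z_cont] by auto

lemma DFz_bound: "\<exists>B>0. \<forall>s\<in>{0..t}. norm (DF (z s)) \<le> B"
proof -
  have "compact ((\<lambda>s. DF (z s)) ` {0..t})" using compact_continuous_image[OF DFz_cont] by auto
  then show ?thesis using compact_imp_bounded bounded_pos by (metis image_eqI)
qed

lemma cfv: "continuous_on ({0..t} \<times> UNIV) (\<lambda>(s, v). blinfun_apply (DF (z s)) v)"
proof -
  have c1: "continuous_on ({0..t} \<times> UNIV) (\<lambda>p::real\<times>'a. DF (z (fst p)))"
    by (rule continuous_on_compose2[OF DFz_cont continuous_on_fst]) auto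
  have "continuous_on ({0..t} \<times> UNIV) (\<lambda>p::real\<times>'a. blinfun_apply (DF (z (fst p))) (snd p))"
    using c1 by (intro continuous_intros)
  then show ?thesis by (simp add: case_prod_beta')
qed

lemma var_ex: "\<exists>v. sol (\<lambda>s v. DF (z s) v) t v \<and> v 0 = h"
proof -
  obtain B where B: "B > 0" "\<forall>s\<in>{0..t}. norm (DF (z s)) \<le> B" using DFz_bound by blast
  have "\<exists>v. sol (\<lambda>s v. DF (z s) v) t v \<and> v 0 = h \<and> (\<forall>s\<in>{0..t}. norm (v s - 0) \<le> norm h * exp (B * t))"
  proof (rule picard[OF t_nonneg B(1) continuous_on_const cfv])
    fix s y1 y2 assume s: "s \<in> {0..t}"
    have "norm (DF (z s) y1 - DF (z s) y2) = norm (DF (z s) (y1 - y2))" by (simp add: blinfun.diff_right)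
    also have "\<dots> \<le> norm (DF (z s)) * norm (y1 - y2)" by (rule norm_blinfun)
    also have "\<dots> \<le> B * norm (y1 - y2)" using B s by (intro mult_right_mono) auto
    finally show "norm (DF (z s) y1 - DF (z s) y2) \<le> B * norm (y1 - y2)" .
  qed auto
  then show ?thesis by blast
qed

lemma var_unique:
  assumes "sol (\<lambda>s v. DF (z s) v) t v1" "sol (\<lambda>s v. DF (z s) v) t v2" "v1 0 = v2 0" "s \<in> {0..t}"
  shows "v1 s = v2 s"
proof -
  obtain B where B: "B > 0" "\<forall>s\<in>{0..t}. norm (DF (z s)) \<le> B" using DFz_bound by blast
  show ?thesis
  proof (rule unique_sol[OF assms(1,2) B(1) _ assms(3,4)])
    fix s assume s: "s \<in> {0..t}"
    have "norm (DF (z s) (v1 s) - DF (z s) (v2 s)) = norm (DF (z s) (v1 s - v2 s))" by (simp add: blinfun.diff_right)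
    also have "\<dots> \<le> norm (DF (z s)) * norm (v1 s - v2 s)" by (rule norm_blinfun)
    also have "\<dots> \<le> B * norm (v1 s - v2 s)" using B s by (intro mult_right_mono) auto
    finally show "norm (DF (z s) (v1 s) - DF (z s) (v2 s)) \<le> B * norm (v1 s - v2 s)" .
  qed
qed

definition V where "V h = (SOME v. sol (\<lambda>s v. DF (z s) v) t v \<and> v 0 = h)"

lemma V: "sol (\<lambda>s v. DF (z s) v) t (V h)" "V h 0 = h"
  using someI_ex[OF var_ex[of h]] unfolding V_def by auto

definition M where "M s h = V h s"

lemma M_linear: assumes s: "s \<in> {0..t}" shows "linear (M s)"
proof (rule linearI)
  fix a b
  have "sol (\<lambda>s v. DF (z s) v) t (\<lambda>r. V a r + V b r)"
    using V(1)[of a] V(1)[of b] unfolding sol_def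
    by (auto intro!: has_vector_derivative_add simp: blinfun.add_right)
  then show "M s (a + b) = M s a + M s b"
    unfolding M_def using var_unique[of "V (a+b)" "\<lambda>r. V a r + V b r" s] V s by auto
next
  fix c a
  have "sol (\<lambda>s v. DF (z s) v) t (\<lambda>r. c *\<^sub>R V a r)"
    using V(1)[of a] unfolding sol_def
    by (auto intro!: bounded_linear.has_vector_derivative[OF bounded_linear_scaleR_right] simp: blinfun.scaleR_right)
  then show "M s (c *\<^sub>R a) = c *\<^sub>R M s a"
    unfolding M_def using var_unique[of "V (c *\<^sub>R a)" "\<lambda>r. c *\<^sub>R V a r" s] V s by auto
qed

lemma M_bl: "s \<in> {0..t} \<Longrightarrow> bounded_linear (M s)"
  using M_linear linear_conv_bounded_linear by blast

lemma flow_est: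
  assumes e: "e > 0"
  shows "\<exists>d>0. \<forall>x. norm (x - z 0) < d \<longrightarrow> (\<exists>y. sol (\<lambda>_. F) t y \<and> y 0 = x \<and>
           (\<forall>s\<in>{0..t}. norm (y s - z s - M s (x - z 0)) \<le> e * norm (x - z 0)))"
proof -
  obtain \<delta> L where \<delta>: "\<delta> > 0" "L > 0" and nr: "\<And>x. norm (x - z 0) < \<delta> \<Longrightarrow> (\<exists>y. sol (\<lambda>_. F) t y \<and> y 0 = x \<and>
      (\<forall>s\<in>{0..t}. norm (y s - z s) \<le> norm (x - z 0) * exp (L * t)))"
    using near by blast
  obtain B where B: "B > 0" "\<forall>s\<in>{0..t}. norm (DF (z s)) \<le> B" using DFz_bound by blast
  define X where "X = t * exp (L * t) * exp (B * t)"
  have X0: "X \<ge> 0" unfolding X_def using t_nonneg by simp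
  define \<eta> where "\<eta> = e / (X + 1)"
  have \<eta>: "\<eta> > 0" using e X0 by (simp add: \<eta>_def)
  have \<eta>X: "\<eta> * X \<le> e"
  proof -
    have "\<eta> * X \<le> \<eta> * (X + 1)" using \<eta> by simp
    also have "\<dots> = e" using X0 by (simp add: \<eta>_def)
    finally show ?thesis .
  qed
  have C: "compact (z ` {0..t})" using compact_continuous_image[OF z_cont] by auto
  obtain \<rho> where \<rho>: "\<rho> > 0" and ud: "\<forall>c\<in>z ` {0..t}. \<forall>y. norm (y - c) \<le> \<rho> \<longrightarrow>
      norm (F y - F c - DF c (y - c)) \<le> \<eta> * norm (y - c)"
    using unif_diff[OF F_deriv DF_cont C \<eta>] by blast
  define d where "d = min \<delta> (\<rho> * exp (- (L * t)))"
  have d: "d > 0" using \<delta> \<rho> by (simp add: d_def)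
  have "\<exists>y. sol (\<lambda>_. F) t y \<and> y 0 = x \<and> (\<forall>s\<in>{0..t}. norm (y s - z s - M s (x - z 0)) \<le> e * norm (x - z 0))"
    if x: "norm (x - z 0) < d" for x
  proof -
    define h where "h = x - z 0"
    obtain y where y: "sol (\<lambda>_. F) t y" "y 0 = x" and ty0: "\<forall>s\<in>{0..t}. norm (y s - z s) \<le> norm h * exp (L * t)"
      using nr[of x] x unfolding h_def d_def by auto
    have hr: "norm h * exp (L * t) \<le> \<rho>"
    proof -
      have "norm h * exp (L * t) \<le> (\<rho> * exp (- (L * t))) * exp (L * t)"
        using x unfolding h_def d_def by (intro mult_right_mono) auto
      also have "\<dots> = \<rho>" by (simp add: exp_minus)
      finally show ?thesis .
    qed
    define v where "v = V h"
    have v: "sol (\<lambda>s v. DF (z s) v) t v" "v 0 = h" using V unfolding v_def by auto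
    define u where "u r = norm (y r - z r - v r)" for r
    have cu: "continuous_on {0..t} u" unfolding u_def
      using sol_cont[OF y(1)] sol_cont[OF z_sol] sol_cont[OF v(1)] by (intro continuous_intros)
    define a where "a = \<eta> * norm h * exp (L * t) * t"
    have ub: "u r \<le> a + B * integral {0..r} u" if r: "r \<in> {0..t}" for r
    proof -
      have sub: "{0..r} \<subseteq> {0..t}" using r by auto
      have iy: "(\<lambda>r. F (y r)) integrable_on {0..r}" and ey: "y r = y 0 + integral {0..r} (\<lambda>r. F (y r))"
        using sol_integral[OF y(1) r] by auto
      have iz: "(\<lambda>r. F (z r)) integrable_on {0..r}" and ez: "z r = z 0 + integral {0..r} (\<lambda>r. F (z r))"
        using sol_integral[OF z_sol r] by auto
      have iv: "(\<lambda>r. DF (z r) (v r)) integrable_on {0..r}" and ev: "v r = v 0 + integral {0..r} (\<lambda>r. DF (z r) (v r))"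
        using sol_integral[OF v(1) r] by auto
      have "y r - z r - v r = integral {0..r} (\<lambda>r. F (y r)) - integral {0..r} (\<lambda>r. F (z r)) - integral {0..r} (\<lambda>r. DF (z r) (v r))"
        using ey ez ev y(2) v(2) unfolding h_def by (simp add: algebra_simps)
      also have "\<dots> = integral {0..r} (\<lambda>r. F (y r) - F (z r) - DF (z r) (v r))"
        using iy iz iv by (simp add: integral_diff integrable_diff)
      finally have eq: "y r - z r - v r = integral {0..r} (\<lambda>r. F (y r) - F (z r) - DF (z r) (v r))" .
      have c0: "\<eta> * norm h * exp (L * t) \<ge> 0" using \<eta> by simp
      have "u r \<le> integral {0..r} (\<lambda>r. \<eta> * norm h * exp (L * t) + B * u r)"
        unfolding u_def eq
      proof (rule integral_norm_bound_integral)
        show "(\<lambda>r. F (y r) - F (z r) - DF (z r) (v r)) integrable_on {0..r}"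
          using iy iz iv by (intro integrable_diff)
        show "(\<lambda>r. \<eta> * norm h * exp (L * t) + B * norm (y r - z r - v r)) integrable_on {0..r}"
        proof -
          have "(\<lambda>r. \<eta> * norm h * exp (L * t) + B * u r) integrable_on {0..r}"
            using continuous_on_subset[OF cu sub] by (intro integrable_continuous_real continuous_intros)
          then show ?thesis by (simp add: u_def)
        qed
        fix q assume q: "q \<in> {0..r}"
        then have qt: "q \<in> {0..t}" using sub by auto
        have "F (y q) - F (z q) - DF (z q) (v q) = (F (y q) - F (z q) - DF (z q) (y q - z q)) + DF (z q) (y q - z q - v q)"
          by (simp add: blinfun.diff_right)
        then have "norm (F (y q) - F (z q) - DF (z q) (v q)) \<le> norm (F (y q) - F (z q) - DF (z q) (y q - z q)) + norm (DF (z q) (y q - z q - v q))"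
          by (metis norm_triangle_ineq)
        also have "norm (F (y q) - F (z q) - DF (z q) (y q - z q)) \<le> \<eta> * norm (y q - z q)"
          using ud qt ty0 hr by force
        also have "\<eta> * norm (y q - z q) \<le> \<eta> * norm h * exp (L * t)"
          using ty0 qt \<eta> by (simp add: mult.assoc)
        also have "norm (DF (z q) (y q - z q - v q)) \<le> norm (DF (z q)) * norm (y q - z q - v q)" by (rule norm_blinfun)
        also have "\<dots> \<le> B * norm (y q - z q - v q)" using B qt by (intro mult_right_mono) auto
        finally show "norm (F (y q) - F (z q) - DF (z q) (v q)) \<le> \<eta> * norm h * exp (L * t) + B * norm (y q - z q - v q)"
          by simp
      qed
      also have "\<dots> = r * (\<eta> * norm h * exp (L * t)) + B * integral {0..r} u"
        using continuous_on_subset[OF cu sub] r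
        by (subst integral_add) (auto intro!: integrable_continuous_real continuous_intros simp: integral_const_real)
      also have "r * (\<eta> * norm h * exp (L * t)) \<le> a" unfolding a_def using r c0
        by (simp add: mult.commute[of _ t] mult_right_mono)
      finally show ?thesis by simp
    qed
    have "norm (y s - z s - M s h) \<le> e * norm h" if s: "s \<in> {0..t}" for s
    proof -
      have "u s \<le> a * exp (B * s)" using gronwall[OF t_nonneg B(1) cu ub s] .
      also have "\<dots> \<le> a * exp (B * t)" using s B \<eta> unfolding a_def by (intro mult_left_mono) auto
      also have "\<dots> = (\<eta> * X) * norm h" unfolding a_def X_def by simp
      also have "\<dots> \<le> e * norm h" using \<eta>X by (intro mult_right_mono) auto
      finally show ?thesis unfolding u_def M_def v_def .
    qed
    then show ?thesis using y unfolding h_def by blast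
  qed
  then show ?thesis using d by blast
qed

lemma flow_est2:
  assumes e: "e > 0"
  shows "\<exists>d>0. \<forall>x. norm (x - z 0) < d \<longrightarrow> flow_exists F t x \<and>
           (\<forall>s\<in>{0..t}. norm (flow F s x - z s - M s (x - z 0)) \<le> e * norm (x - z 0))"
proof -
  obtain d where d: "d > 0" and H: "\<forall>x. norm (x - z 0) < d \<longrightarrow> (\<exists>y. sol (\<lambda>_. F) t y \<and> y 0 = x \<and>
           (\<forall>s\<in>{0..t}. norm (y s - z s - M s (x - z 0)) \<le> e * norm (x - z 0)))"
    using flow_est[OF e] by blast
  have "flow_exists F t x \<and> (\<forall>s\<in>{0..t}. norm (flow F s x - z s - M s (x - z 0)) \<le> e * norm (x - z 0))"
    if xd: "norm (x - z 0) < d" for x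
  proof -
    obtain y where y: "sol (\<lambda>_. F) t y" "y 0 = x" "\<forall>s\<in>{0..t}. norm (y s - z s - M s (x - z 0)) \<le> e * norm (x - z 0)"
      using H xd by blast
    show ?thesis using flow_sol[OF y(1)] y(2,3) t_nonneg by auto
  qed
  then show ?thesis using d by blast
qed

lemma flow_deriv:
  assumes s: "s \<in> {0..t}"
  shows "(flow F s has_derivative M s) (at (z 0))"
  unfolding has_derivative_at_alt
proof (intro conjI allI impI)
  show "bounded_linear (M s)" using M_bl[OF s] .
  fix e :: real assume e: "e > 0"
  obtain d where d: "d > 0" and H: "\<forall>x. norm (x - z 0) < d \<longrightarrow> flow_exists F t x \<and>
           (\<forall>s\<in>{0..t}. norm (flow F s x - z s - M s (x - z 0)) \<le> e * norm (x - z 0))"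
    using flow_est2[OF e] by blast
  have fz: "flow F s (z 0) = z s" using flow_sol[OF z_sol s] by simp
  show "\<exists>d>0. \<forall>y. norm (y - z 0) < d \<longrightarrow> norm (flow F s y - flow F s (z 0) - M s (y - z 0)) \<le> e * norm (y - z 0)"
    using d H s fz by auto
qed

end

lemma var_close:
  fixes A :: "real \<Rightarrow> 'a::euclidean_space \<Rightarrow>\<^sub>L 'a"
  assumes v: "sol (\<lambda>s v. A s v) t v" and B: "B > 0" "\<forall>s\<in>{0..t}. norm (A s) \<le> B" and s: "s \<in> {0..t}"
  shows "norm (v s - v 0) \<le> (exp (B * s) - 1) * norm (v 0)"
proof -
  have s0: "sol (\<lambda>s v. A s v) t (\<lambda>_. 0)" unfolding sol_def by (auto simp: blinfun.zero_right)
  have vb: "norm (v r) \<le> norm (v 0) * exp (B * r)" if r: "r \<in> {0..t}" for r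
  proof -
    have "norm (v r - 0) \<le> norm (v 0 - 0) * exp (B * r)"
    proof (rule gronwall_sol[OF v s0 B(1) _ r])
      fix q assume q: "q \<in> {0..t}"
      have "norm (A q (v q) - A q 0) \<le> norm (A q) * norm (v q - 0)" by (simp add: norm_blinfun blinfun.zero_right)
      also have "\<dots> \<le> B * norm (v q - 0)" using B q by (intro mult_right_mono) auto
      finally show "norm (A q (v q) - A q 0) \<le> B * norm (v q - 0)" .
    qed
    then show ?thesis by simp
  qed
  have sub: "{0..s} \<subseteq> {0..t}" using s by auto
  have iv: "(\<lambda>r. A r (v r)) integrable_on {0..s}" and ev: "v s = v 0 + integral {0..s} (\<lambda>r. A r (v r))"
    using sol_integral[OF v s] by auto
  have hi: "((\<lambda>r. B * norm (v 0) * exp (B * r)) has_integral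
      ((\<lambda>r. norm (v 0) * exp (B * r)) s - (\<lambda>r. norm (v 0) * exp (B * r)) 0)) {0..s}"
    apply (rule fundamental_theorem_of_calculus)
    using s apply simp
    unfolding has_real_derivative_iff_has_vector_derivative[symmetric]
    by (auto intro!: derivative_eq_intros)
  have "norm (v s - v 0) = norm (integral {0..s} (\<lambda>r. A r (v r)))" using ev by simp
  also have "\<dots> \<le> integral {0..s} (\<lambda>r. B * norm (v 0) * exp (B * r))"
  proof (rule integral_norm_bound_integral[OF iv])
    show "(\<lambda>r. B * norm (v 0) * exp (B * r)) integrable_on {0..s}" using hi by blast
    fix q assume q: "q \<in> {0..s}"
    then have qt: "q \<in> {0..t}" using sub by auto
    have "norm (A q (v q)) \<le> norm (A q) * norm (v q)" by (rule norm_blinfun)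
    also have "\<dots> \<le> B * (norm (v 0) * exp (B * q))"
      using B qt vb[OF qt] by (intro mult_mono) auto
    finally show "norm (A q (v q)) \<le> B * norm (v 0) * exp (B * q)" by (simp add: mult.assoc)
  qed
  also have "\<dots> = (exp (B * s) - 1) * norm (v 0)" using integral_unique[OF hi] by (simp add: algebra_simps)
  finally show ?thesis .
qed

context c1field begin

lemma flow_cont:
  assumes "flow_exists F t x" shows "continuous_on {0..t} (\<lambda>r. flow F r x)"
proof -
  obtain \<gamma> where g: "sol (\<lambda>_. F) t \<gamma>" "\<gamma> 0 = x" using flow_exists_sol[OF assms] by blast
  have "continuous_on {0..t} \<gamma>" using sol_cont[OF g(1)] .
  then show ?thesis using flow_sol(1)[OF g(1)] g(2) continuous_on_cong by (metis (no_types, lifting))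
qed

lemma flow_diff_full:
  assumes fe: "flow_exists F t x"
  shows "\<exists>z Ms. sol (\<lambda>_. F) t z \<and> z 0 = x \<and> (\<forall>s\<in>{0..t}. flow F s x = z s) \<and>
   (\<forall>s\<in>{0..t}. (flow F s has_derivative Ms s) (at x) \<and> bounded_linear (Ms s)) \<and>
   (\<forall>h. sol (\<lambda>s v. DF (z s) v) t (\<lambda>s. Ms s h) \<and> Ms 0 h = h) \<and>
   (\<forall>e>0. \<exists>d>0. \<forall>x'. norm (x' - x) < d \<longrightarrow> flow_exists F t x' \<and>
        (\<forall>s\<in>{0..t}. norm (flow F s x' - z s - Ms s (x' - x)) \<le> e * norm (x' - x))) \<and>
   (\<exists>d>0. \<exists>C. \<forall>x'. norm (x' - x) < d \<longrightarrow> (\<forall>s\<in>{0..t}. norm (flow F s x' - z s) \<le> C * norm (x' - x)))"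
proof -
  obtain z where z: "sol (\<lambda>_. F) t z" "z 0 = x" and t: "0 \<le> t" using flow_exists_sol[OF fe] by blast
  interpret tr: traj F DF z t using z t by unfold_locales auto
  have fz: "\<forall>s\<in>{0..t}. flow F s x = z s" using flow_sol(1)[OF z(1)] z(2) by auto
  have A: "\<forall>s\<in>{0..t}. (flow F s has_derivative tr.M s) (at x) \<and> bounded_linear (tr.M s)"
    using tr.flow_deriv tr.M_bl z(2) by auto
  have B: "\<forall>h. sol (\<lambda>s v. DF (z s) v) t (\<lambda>s. tr.M s h) \<and> tr.M 0 h = h"
    using tr.V unfolding tr.M_def by auto
  have C: "\<forall>e>0. \<exists>d>0. \<forall>x'. norm (x' - x) < d \<longrightarrow> flow_exists F t x' \<and>
        (\<forall>s\<in>{0..t}. norm (flow F s x' - z s - tr.M s (x' - x)) \<le> e * norm (x' - x))"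
    using tr.flow_est2 z(2) by auto
  obtain \<delta> L where \<delta>: "\<delta> > 0" and nr: "\<forall>x'. norm (x' - z 0) < \<delta> \<longrightarrow> (\<exists>y. sol (\<lambda>_. F) t y \<and> y 0 = x' \<and>
      (\<forall>s\<in>{0..t}. norm (y s - z s) \<le> norm (x' - z 0) * exp (L * t)))"
    using tr.near by blast
  have D: "\<forall>x'. norm (x' - x) < \<delta> \<longrightarrow> (\<forall>s\<in>{0..t}. norm (flow F s x' - z s) \<le> exp (L * t) * norm (x' - x))"
  proof (intro allI impI ballI)
    fix x' s assume x': "norm (x' - x) < \<delta>" and s: "s \<in> {0..t}"
    obtain y where y: "sol (\<lambda>_. F) t y" "y 0 = x'" "\<forall>s\<in>{0..t}. norm (y s - z s) \<le> norm (x' - z 0) * exp (L * t)"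
      using nr x' z(2) by blast
    show "norm (flow F s x' - z s) \<le> exp (L * t) * norm (x' - x)"
      using flow_sol(1)[OF y(1) s] y(2,3) s z(2) by (auto simp: mult.commute)
  qed
  show ?thesis
    apply (rule exI[of _ z], rule exI[of _ tr.M])
    using z fz A B C D \<delta> by blast
qed

end

lemma bl_Jmat: "bounded_linear (Jmat :: ('n::finite) phase \<Rightarrow> 'n phase)"
  unfolding Jmat_def by (intro bounded_linear_Pair bounded_linear_snd bounded_linear_minus[OF bounded_linear_fst])

definition Jl :: "('n::finite) phase \<Rightarrow>\<^sub>L 'n phase" where "Jl = Blinfun Jmat"

lemma Jl_apply[simp]: "blinfun_apply Jl = Jmat"
  unfolding Jl_def by (rule bounded_linear_Blinfun_apply[OF bl_Jmat])

lemma norm_Jmat: "norm (Jmat x) = norm x"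
  unfolding Jmat_def by (simp add: norm_prod_def)

lemma norm_Jl: "norm (Jl :: ('n::finite) phase \<Rightarrow>\<^sub>L 'n phase) \<le> 1"
  by (rule norm_blinfun_bound) (auto simp: norm_Jmat)

lemma norm_Jl_comp:
  fixes A :: "('n::finite) phase \<Rightarrow>\<^sub>L 'n phase"
  shows "norm (Jl o\<^sub>L A) \<le> norm A"
proof -
  have "norm (Jl o\<^sub>L A) \<le> norm (Jl :: 'n phase \<Rightarrow>\<^sub>L 'n phase) * norm A" using norm_blinfun_compose[of Jl A] by simp
  also have "\<dots> \<le> 1 * norm A" using norm_Jl[where 'n='n] by (intro mult_right_mono) auto
  finally show ?thesis by simp
qed

lemma ham_c1:
  assumes gH_deriv: "\<forall>x. (gH has_derivative blinfun_apply (Hess x)) (at x)"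
    and Hess_cont: "continuous_on UNIV Hess"
  shows "c1field (ham_vf gH) (\<lambda>x. Jl o\<^sub>L Hess (x::('n::finite) phase))"
proof
  fix x :: "'n phase"
    have e: "blinfun_apply (Jl o\<^sub>L Hess x) = (\<lambda>h. Jmat (Hess x h))" by (auto simp: fun_eq_iff)
    show "(ham_vf gH has_derivative blinfun_apply (Jl o\<^sub>L Hess x)) (at x)"
    using bounded_linear.has_derivative[OF bl_Jmat gH_deriv[rule_format, of x]]
    unfolding ham_vf_def[abs_def] e by simp
next
  show "continuous_on UNIV (\<lambda>x. Jl o\<^sub>L Hess x)" using Hess_cont by (intro continuous_intros)
qed

definition lag :: "(('n::finite) phase \<Rightarrow> real) \<Rightarrow> ('n phase \<Rightarrow> 'n phase) \<Rightarrow> 'n phase \<Rightarrow> real" where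
  "lag H gH x = snd x \<bullet> snd (gH x) - H x"

definition Dlag :: "(('n::finite) phase \<Rightarrow> 'n phase) \<Rightarrow> ('n phase \<Rightarrow> ('n phase \<Rightarrow>\<^sub>L 'n phase)) \<Rightarrow> 'n phase \<Rightarrow> ('n phase \<Rightarrow>\<^sub>L real)" where
  "Dlag gH Hess x = blinfun_inner_left ((0, snd (gH x)) - gH x) + (blinfun_inner_left (0, snd x) o\<^sub>L Hess x)"

lemma Dlag_apply: "blinfun_apply (Dlag gH Hess x) h = snd h \<bullet> snd (gH x) + snd x \<bullet> snd (Hess x h) - gH x \<bullet> h"
  unfolding Dlag_def by (simp add: blinfun.add_left inner_diff_right inner_Pair_0 inner_commute)

lemma lag_deriv:
  assumes H_grad: "\<forall>x. has_gradient H (gH x) x"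
    and gH_deriv: "\<forall>x. (gH has_derivative blinfun_apply (Hess x)) (at x)"
  shows "(lag H gH has_derivative blinfun_apply (Dlag gH Hess x)) (at x)"
proof -
  have hH: "(H has_derivative (\<lambda>h. gH x \<bullet> h)) (at x)" using H_grad[rule_format, of x] unfolding has_gradient_def by auto
  have "((\<lambda>x. snd x \<bullet> snd (gH x) - H x) has_derivative (\<lambda>h. snd x \<bullet> snd (Hess x h) + snd h \<bullet> snd (gH x) - gH x \<bullet> h)) (at x)"
    by (auto intro!: derivative_eq_intros gH_deriv[rule_format] hH)
  then show ?thesis unfolding lag_def[abs_def] by (simp add: Dlag_apply[abs_def] algebra_simps)
qed

lemma Dlag_cont:
  assumes gH_deriv: "\<forall>x. (gH has_derivative blinfun_apply (Hess x)) (at x)"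
    and Hess_cont: "continuous_on UNIV Hess"
  shows "continuous_on UNIV (Dlag gH Hess)"
proof -
  have "continuous_on UNIV gH"
    using gH_deriv has_derivative_continuous continuous_at_imp_continuous_on by blast
  then show ?thesis unfolding Dlag_def[abs_def] using Hess_cont by (intro continuous_intros)
qed

lemma action_deriv:
  fixes H :: "('n::finite) phase \<Rightarrow> real" and gH :: "'n phase \<Rightarrow> 'n phase"
    and Hess :: "'n phase \<Rightarrow> ('n phase \<Rightarrow>\<^sub>L 'n phase)"
  assumes H_grad: "\<forall>x. has_gradient H (gH x) x"
    and gH_deriv: "\<forall>x. (gH has_derivative blinfun_apply (Hess x)) (at x)"
    and Hess_cont: "continuous_on UNIV Hess"
    and fe: "flow_exists (ham_vf gH) t x"
  shows "\<exists>M. (flow (ham_vf gH) t has_derivative M) (at x) \<and>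
     ((\<lambda>x'. integral {0..t} (\<lambda>r. lag H gH (flow (ham_vf gH) r x'))) has_derivative
        (\<lambda>h. snd (flow (ham_vf gH) t x) \<bullet> fst (M h) - snd x \<bullet> fst h)) (at x)"
proof -
  define F where "F = ham_vf gH"
  define DF where "DF x = Jl o\<^sub>L Hess x" for x
  interpret c: c1field F DF using ham_c1[OF gH_deriv Hess_cont] unfolding DF_def[abs_def] F_def .
  have fe: "flow_exists F t x" using fe unfolding F_def .
  have t: "0 \<le> t" using fe flow_exists_def by auto
  obtain z Ms where z: "sol (\<lambda>_. F) t z" "z 0 = x" and fz: "\<forall>s\<in>{0..t}. flow F s x = z s"
    and der: "\<forall>s\<in>{0..t}. (flow F s has_derivative Ms s) (at x) \<and> bounded_linear (Ms s)"
    and var: "\<forall>h. sol (\<lambda>s v. DF (z s) v) t (\<lambda>s. Ms s h) \<and> Ms 0 h = h"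
    and est: "\<forall>e>0. \<exists>d>0. \<forall>x'. norm (x' - x) < d \<longrightarrow> flow_exists F t x' \<and>
        (\<forall>s\<in>{0..t}. norm (flow F s x' - z s - Ms s (x' - x)) \<le> e * norm (x' - x))"
    and lipb: "\<exists>d>0. \<exists>C. \<forall>x'. norm (x' - x) < d \<longrightarrow> (\<forall>s\<in>{0..t}. norm (flow F s x' - z s) \<le> C * norm (x' - x))"
    using c.flow_diff_full[OF fe] by blast
  obtain d0 C where d0: "d0 > 0" and Cb: "\<forall>x'. norm (x' - x) < d0 \<longrightarrow> (\<forall>s\<in>{0..t}. norm (flow F s x' - z s) \<le> C * norm (x' - x))"
    using lipb by blast
  define Dl where "Dl = Dlag gH Hess"
  have lagd: "\<And>y. (lag H gH has_derivative blinfun_apply (Dl y)) (at y)"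
    using lag_deriv[OF H_grad gH_deriv] Dl_def by simp
  have lagc: "continuous_on UNIV (lag H gH)"
    using lagd has_derivative_continuous continuous_at_imp_continuous_on by blast
  have Dlc: "continuous_on UNIV Dl" using Dlag_cont[OF gH_deriv Hess_cont] Dl_def by simp
  have zc: "continuous_on {0..t} z" using sol_cont[OF z(1)] .
  have Dlzc: "continuous_on {0..t} (\<lambda>r. Dl (z r))" using continuous_on_compose2[OF Dlc zc] by auto
  obtain Cl where Cl: "Cl > 0" "\<forall>r\<in>{0..t}. norm (Dl (z r)) \<le> Cl"
  proof -
    have "compact ((\<lambda>r. Dl (z r)) ` {0..t})" using compact_continuous_image[OF Dlzc] by auto
    then show ?thesis using that compact_imp_bounded bounded_pos by (metis image_eqI)
  qed
  have Mst: "bounded_linear (Ms t)" using der t by auto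
  have vcont: "continuous_on {0..t} (\<lambda>s. Ms s h)" for h using sol_cont var by blast
  have cons: "integral {0..t} (\<lambda>r. Dl (z r) (Ms r h)) = snd (z t) \<bullet> fst (Ms t h) - snd x \<bullet> fst h" for h
  proof -
    define v where "v s = Ms s h" for s
    have vs: "sol (\<lambda>s v. DF (z s) v) t v" "v 0 = h" using var[rule_format, of h] unfolding v_def by auto
    have vc: "continuous_on {0..t} v" using sol_cont[OF vs(1)] .
    have ic: "continuous_on {0..t} (\<lambda>r. Dl (z r) (v r))" using Dlzc vc by (intro continuous_intros)
    define g where "g s = snd (z s) \<bullet> fst (v s) - integral {0..s} (\<lambda>r. Dl (z r) (v r))" for s
    have gd: "(g has_derivative (\<lambda>h. 0)) (at s within {0..t})" if s: "s \<in> {0..t}" for s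
    proof -
      have zd: "(z has_vector_derivative F (z s)) (at s within {0..t})" using z(1) s unfolding sol_def by auto
      have vd: "(v has_vector_derivative DF (z s) (v s)) (at s within {0..t})" using vs(1) s unfolding sol_def by auto
      have d1: "((\<lambda>s. snd (z s)) has_vector_derivative snd (F (z s))) (at s within {0..t})"
        using bounded_linear.has_vector_derivative[OF bounded_linear_snd zd] .
      have d2: "((\<lambda>s. fst (v s)) has_vector_derivative fst (DF (z s) (v s))) (at s within {0..t})"
        using bounded_linear.has_vector_derivative[OF bounded_linear_fst vd] .
      have d3: "((\<lambda>s. snd (z s) \<bullet> fst (v s)) has_vector_derivative
          (snd (z s) \<bullet> fst (DF (z s) (v s)) + snd (F (z s)) \<bullet> fst (v s))) (at s within {0..t})"
        using bounded_bilinear.has_vector_derivative[OF bounded_bilinear_inner d1 d2] .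
      have d4: "((\<lambda>s. integral {0..s} (\<lambda>r. Dl (z r) (v r))) has_vector_derivative Dl (z s) (v s)) (at s within {0..t})"
        using integral_has_vector_derivative[OF ic s] .
      have d5: "(g has_vector_derivative (snd (z s) \<bullet> fst (DF (z s) (v s)) + snd (F (z s)) \<bullet> fst (v s) - Dl (z s) (v s))) (at s within {0..t})"
        unfolding g_def using has_vector_derivative_diff[OF d3 d4] .
      have "snd (z s) \<bullet> fst (DF (z s) (v s)) + snd (F (z s)) \<bullet> fst (v s) - Dl (z s) (v s) = 0"
        unfolding DF_def Dl_def F_def
        by (simp add: Dlag_apply ham_vf_def Jmat_def inner_prod_def algebra_simps inner_commute)
      then show ?thesis using d5 by (simp add: has_vector_derivative_def)
    qed
    obtain c where "\<forall>s\<in>{0..t}. g s = c" using has_derivative_zero_constant[of "{0..t}" g] gd by auto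
    then have "g t = g 0" using t by auto
    then show ?thesis unfolding g_def v_def using var[rule_format, of h] z(2) by simp
  qed
  define LA where "LA h = snd (z t) \<bullet> fst (Ms t h) - snd x \<bullet> fst h" for h
  have blLA: "bounded_linear LA"
  proof -
    have "bounded_linear (\<lambda>h. snd (z t) \<bullet> fst (Ms t h))"
      using bounded_linear_compose[OF bounded_linear_inner_right bounded_linear_compose[OF bounded_linear_fst Mst]] .
    moreover have "bounded_linear (\<lambda>h. snd x \<bullet> fst h)"
      using bounded_linear_compose[OF bounded_linear_inner_right bounded_linear_fst] .
    ultimately show ?thesis unfolding LA_def[abs_def] by (rule bounded_linear_sub)
  qed
  define A where "A x' = integral {0..t} (\<lambda>r. lag H gH (flow F r x'))" for x'
  have A_deriv: "(A has_derivative LA) (at x)"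
    unfolding has_derivative_at_alt
  proof (intro conjI allI impI blLA)
    fix e :: real assume e: "e > 0"
    define \<eta> where "\<eta> = e / (2 * (t + 1) * (\<bar>C\<bar> + 1))"
    define \<epsilon> where "\<epsilon> = e / (2 * (t + 1) * Cl)"
    have \<eta>: "\<eta> > 0" unfolding \<eta>_def using e t by (intro divide_pos_pos mult_pos_pos) auto
    have \<epsilon>: "\<epsilon> > 0" unfolding \<epsilon>_def using e t Cl by (intro divide_pos_pos mult_pos_pos) auto
    have zC: "compact (z ` {0..t})" using compact_continuous_image[OF zc] by auto
    obtain \<rho> where \<rho>: "\<rho> > 0" and ud: "\<forall>c\<in>z ` {0..t}. \<forall>y. norm (y - c) \<le> \<rho> \<longrightarrow>
        norm (lag H gH y - lag H gH c - Dl c (y - c)) \<le> \<eta> * norm (y - c)"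
      using unif_diff[OF lagd Dlc zC \<eta>] by blast
    obtain d1 where d1: "d1 > 0" and E: "\<forall>x'. norm (x' - x) < d1 \<longrightarrow> flow_exists F t x' \<and>
        (\<forall>s\<in>{0..t}. norm (flow F s x' - z s - Ms s (x' - x)) \<le> \<epsilon> * norm (x' - x))"
      using est \<epsilon> by blast
    define d where "d = min d0 (min d1 (\<rho> / (\<bar>C\<bar> + 1)))"
    show "\<exists>d>0. \<forall>y. norm (y - x) < d \<longrightarrow> norm (A y - A x - LA (y - x)) \<le> e * norm (y - x)"
    proof (intro exI[of _ d] conjI allI impI)
      show "d > 0" unfolding d_def using d0 d1 \<rho> by (simp add: add_pos_nonneg)
      fix x' assume x': "norm (x' - x) < d"
      define h where "h = x' - x"
      have fe': "flow_exists F t x'" and E': "\<forall>s\<in>{0..t}. norm (flow F s x' - z s - Ms s h) \<le> \<epsilon> * norm h"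
        using E[rule_format, of x'] x' unfolding d_def h_def by auto
      have Cb': "\<forall>s\<in>{0..t}. norm (flow F s x' - z s) \<le> C * norm h" using Cb[rule_format, of x'] x' unfolding d_def h_def by auto
      have hr: "(\<bar>C\<bar> + 1) * norm h \<le> \<rho>"
      proof -
        have "norm h < \<rho> / (\<bar>C\<bar> + 1)" using x' unfolding d_def h_def by auto
        then show ?thesis by (simp add: field_simps add_pos_nonneg)
      qed
      define y where "y r = flow F r x'" for r
      have yc: "continuous_on {0..t} y" using c.flow_cont[OF fe'] unfolding y_def .
      have Ax: "A x = integral {0..t} (\<lambda>r. lag H gH (z r))" unfolding A_def
        by (rule integral_cong) (use fz in auto)
      have i1: "(\<lambda>r. lag H gH (y r)) integrable_on {0..t}"
        using continuous_on_compose2[OF lagc yc] by (auto intro: integrable_continuous_real)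
      have i2: "(\<lambda>r. lag H gH (z r)) integrable_on {0..t}"
        using continuous_on_compose2[OF lagc zc] by (auto intro: integrable_continuous_real)
      have i3: "(\<lambda>r. Dl (z r) (Ms r h)) integrable_on {0..t}"
        using Dlzc vcont[of h] by (intro integrable_continuous_real continuous_intros)
      have "A x' - A x - LA h = integral {0..t} (\<lambda>r. lag H gH (y r)) - integral {0..t} (\<lambda>r. lag H gH (z r))
           - integral {0..t} (\<lambda>r. Dl (z r) (Ms r h))"
        using cons[of h] Ax unfolding LA_def A_def y_def by simp
      also have "\<dots> = integral {0..t} (\<lambda>r. lag H gH (y r) - lag H gH (z r) - Dl (z r) (Ms r h))"
        using i1 i2 i3 by (simp add: integral_diff integrable_diff)
      finally have eqA: "A x' - A x - LA h = integral {0..t} (\<lambda>r. lag H gH (y r) - lag H gH (z r) - Dl (z r) (Ms r h))" .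
      have "norm (integral {0..t} (\<lambda>r. lag H gH (y r) - lag H gH (z r) - Dl (z r) (Ms r h)))
          \<le> integral {0..t} (\<lambda>r. (\<eta> * (\<bar>C\<bar> + 1) + Cl * \<epsilon>) * norm h)"
      proof (rule integral_norm_bound_integral)
        show "(\<lambda>r. lag H gH (y r) - lag H gH (z r) - Dl (z r) (Ms r h)) integrable_on {0..t}"
          using i1 i2 i3 by (intro integrable_diff)
        show "(\<lambda>r. (\<eta> * (\<bar>C\<bar> + 1) + Cl * \<epsilon>) * norm h) integrable_on {0..t}" by (rule integrable_const_ivl)
        fix r assume r: "r \<in> {0..t}"
        have yz: "norm (y r - z r) \<le> (\<bar>C\<bar> + 1) * norm h"
        proof -
          have "norm (y r - z r) \<le> C * norm h" using Cb' r unfolding y_def by auto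
          also have "\<dots> \<le> (\<bar>C\<bar> + 1) * norm h" by (intro mult_right_mono) auto
          finally show ?thesis .
        qed
        have "lag H gH (y r) - lag H gH (z r) - Dl (z r) (Ms r h) =
            (lag H gH (y r) - lag H gH (z r) - Dl (z r) (y r - z r)) + Dl (z r) (y r - z r - Ms r h)"
          by (simp add: blinfun.diff_right)
        then have "norm (lag H gH (y r) - lag H gH (z r) - Dl (z r) (Ms r h)) \<le>
            norm (lag H gH (y r) - lag H gH (z r) - Dl (z r) (y r - z r)) + norm (Dl (z r) (y r - z r - Ms r h))"
          by (metis norm_triangle_ineq)
        also have "norm (lag H gH (y r) - lag H gH (z r) - Dl (z r) (y r - z r)) \<le> \<eta> * norm (y r - z r)"
          by (rule ud[rule_format, OF imageI[OF r]]) (use yz hr in linarith)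
        also have "\<eta> * norm (y r - z r) \<le> \<eta> * ((\<bar>C\<bar> + 1) * norm h)" using yz \<eta> by (intro mult_left_mono) auto
        also have "norm (Dl (z r) (y r - z r - Ms r h)) \<le> norm (Dl (z r)) * norm (y r - z r - Ms r h)" by (rule norm_blinfun)
        also have "\<dots> \<le> Cl * (\<epsilon> * norm h)" using Cl r E'[rule_format, OF r] unfolding y_def by (intro mult_mono) auto
        finally show "norm (lag H gH (y r) - lag H gH (z r) - Dl (z r) (Ms r h)) \<le> (\<eta> * (\<bar>C\<bar> + 1) + Cl * \<epsilon>) * norm h"
          by (simp add: algebra_simps)
      qed
      also have "\<dots> = t * ((\<eta> * (\<bar>C\<bar> + 1) + Cl * \<epsilon>) * norm h)" using t by (simp add: integral_const_real)
      also have "\<dots> \<le> e * norm h"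
      proof -
        have p1: "\<bar>C\<bar> + 1 > 0" "t + 1 > 0" using t by auto
        have "\<eta> * (\<bar>C\<bar> + 1) = e / (2 * (t + 1))" unfolding \<eta>_def using p1 by (simp add: divide_simps)
        then have "t * (\<eta> * (\<bar>C\<bar> + 1)) = e * (t / (2 * (t + 1)))" by simp
        moreover have "t * (Cl * \<epsilon>) = e * (t / (2 * (t + 1)))" unfolding \<epsilon>_def using Cl p1 by (simp add: divide_simps)
        moreover have "t / (2 * (t + 1)) \<le> 1/2" using t by (simp add: field_simps)
        ultimately have "t * (\<eta> * (\<bar>C\<bar> + 1) + Cl * \<epsilon>) = 2 * e * (t / (2 * (t + 1)))" "t / (2 * (t + 1)) \<le> 1/2"
          by (simp_all add: distrib_left)
        moreover have "2 * e * (t / (2 * (t + 1))) \<le> 2 * e * (1/2)" using e calculation(2) by (intro mult_left_mono) auto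
        ultimately have "t * (\<eta> * (\<bar>C\<bar> + 1) + Cl * \<epsilon>) \<le> e" by simp
        then have "(t * (\<eta> * (\<bar>C\<bar> + 1) + Cl * \<epsilon>)) * norm h \<le> e * norm h" by (intro mult_right_mono) auto
        then show ?thesis by (simp add: mult.assoc)
      qed
      finally show "norm (A x' - A x - LA (x' - x)) \<le> e * norm (x' - x)" unfolding eqA[unfolded h_def] h_def .
    qed
  qed
  have "(flow F t has_derivative Ms t) (at x)" using der t by auto
  moreover have "LA = (\<lambda>h. snd (flow F t x) \<bullet> fst (Ms t h) - snd x \<bullet> fst h)"
    using fz t unfolding LA_def by auto
  ultimately show ?thesis using A_deriv unfolding A_def F_def by auto
qed

lemma norm_snd_le': "norm (snd p) \<le> norm p"
  by (metis norm_snd_le prod.collapse)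

lemma lower_block_bij:
  fixes A :: "('n::finite) phase \<Rightarrow> 'n phase"
  assumes bl: "bounded_linear A" and inj0: "\<And>v. snd (A (0, v)) = 0 \<Longrightarrow> v = 0"
  shows "bij (lower_block A)"
proof -
  have blD: "bounded_linear (lower_block A)"
  proof -
    have "bounded_linear (\<lambda>v::real^'n. (0::real^'n, v))" by (intro bounded_linear_Pair bounded_linear_zero bounded_linear_ident)
    then have "bounded_linear (\<lambda>v::real^'n. A (0, v))" using bounded_linear_compose[OF bl] by blast
    then show ?thesis unfolding lower_block_def[abs_def] using bounded_linear_compose[OF bounded_linear_snd] by blast
  qed
  then have lD: "linear (lower_block A)" using bounded_linear.linear by blast
  have "inj (lower_block A)" unfolding linear_injective_0[OF lD] lower_block_def using inj0 by blast
  moreover have "surj (lower_block A)" using linear_inj_imp_surj[OF lD] calculation by blast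
  ultimately show ?thesis by (simp add: bij_def)
qed

theorem theorem4:
  fixes H :: "('n::finite) phase \<Rightarrow> real"
    and gH :: "'n phase \<Rightarrow> 'n phase"
    and Hess :: "'n phase \<Rightarrow> ('n phase \<Rightarrow>\<^sub>L 'n phase)"
    and K :: "'n phase set"
    and T :: ereal
  assumes H_grad: "\<forall>x. has_gradient H (gH x) x"
    and gH_deriv: "\<forall>x. (gH has_derivative blinfun_apply (Hess x)) (at x)"
    and Hess_cont: "continuous_on UNIV Hess"
    and K_ne: "K \<noteq> {}" and K_compact: "compact K"
    and T_pos: "0 < T"
    and K_inv: "\<forall>x\<in>K. \<forall>t. 0 \<le> t \<and> ereal t \<le> T \<longrightarrow>
                  flow_exists (ham_vf gH) t x \<and> flow (ham_vf gH) t x \<in> K"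
  shows "\<forall>dt. 0 < dt \<and> ereal dt < step_bound T (hess_bound Hess K) \<longrightarrow>
     (\<forall>x\<in>K. lower_block_invertible_at (flow (ham_vf gH) dt) x) \<and>
     (\<forall>U. qP_chart (ham_vf gH) dt U \<and> U \<inter> K \<noteq> {} \<and>
          simply_connected (qP_map (flow (ham_vf gH) dt) ` U) \<longrightarrow>
        (let \<Phi> = flow (ham_vf gH) dt; \<psi> = qP_map \<Phi>; W = \<psi> ` U in
          (\<forall>x\<in>U. lower_block_invertible_at \<Phi> x) \<and>
          diffeo_on U W \<psi> \<and> open W \<and> simply_connected W \<and>
          (\<exists>S :: 'n phase \<Rightarrow> real.
             (\<forall>y\<in>W. has_gradient S (snd (inv_into U \<psi> y), fst (\<Phi> (inv_into U \<psi> y))) y) \<and>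
             (\<forall>x\<in>U. has_gradient (\<lambda>y. (S y - fst y \<bullet> snd y) / dt)
                        (scaleR (1/dt) (JmatT (\<Phi> x - x))) (I1 x + I2 (\<Phi> x))))))"
proof (intro allI impI)
  fix dt :: real
  assume dt: "0 < dt \<and> ereal dt < step_bound T (hess_bound Hess K)"
  define F where "F = ham_vf gH"
  define DF where "DF x = Jl o\<^sub>L Hess x" for x
  interpret c: c1field F DF using ham_c1[OF gH_deriv Hess_cont] unfolding DF_def[abs_def] F_def .
  define LK where "LK = hess_bound Hess K"
  have dt0: "0 < dt" using dt by auto
  have bdd: "bdd_above ((\<lambda>y. norm (Hess y)) ` K)"
  proof -
    have "continuous_on K (\<lambda>y. norm (Hess y))" using Hess_cont continuous_on_subset
      by (intro continuous_intros) auto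
    then have "compact ((\<lambda>y. norm (Hess y)) ` K)" using compact_continuous_image K_compact by blast
    then show ?thesis by (intro bounded_imp_bdd_above compact_imp_bounded)
  qed
  have LK_ub: "\<And>y. y \<in> K \<Longrightarrow> norm (Hess y) \<le> LK"
    unfolding LK_def hess_bound_def using bdd by (rule cSUP_upper2) auto
  have LK0: "0 \<le> LK" using K_ne LK_ub norm_ge_zero order_trans by blast
  have dtT: "ereal dt < T" and dtL: "ereal dt < (if LK = 0 then \<infinity> else ereal (ln 2 / LK))"
    using dt unfolding step_bound_def LK_def by auto
  have LKdt: "LK < ln 2 / dt"
  proof (cases "LK = 0")
    case True then show ?thesis using dt0 by simp
  next
    case False
    then have "dt < ln 2 / LK" using dtL by simp
    then have "dt * LK < ln 2" using False LK0 by (simp add: field_simps)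
    then show ?thesis using dt0 by (simp add: field_simps)
  qed
  show "(\<forall>x\<in>K. lower_block_invertible_at (flow (ham_vf gH) dt) x) \<and>
     (\<forall>U. qP_chart (ham_vf gH) dt U \<and> U \<inter> K \<noteq> {} \<and>
          simply_connected (qP_map (flow (ham_vf gH) dt) ` U) \<longrightarrow>
        (let \<Phi> = flow (ham_vf gH) dt; \<psi> = qP_map \<Phi>; W = \<psi> ` U in
          (\<forall>x\<in>U. lower_block_invertible_at \<Phi> x) \<and>
          diffeo_on U W \<psi> \<and> open W \<and> simply_connected W \<and>
          (\<exists>S :: 'n phase \<Rightarrow> real.
             (\<forall>y\<in>W. has_gradient S (snd (inv_into U \<psi> y), fst (\<Phi> (inv_into U \<psi> y))) y) \<and>
             (\<forall>x\<in>U. has_gradient (\<lambda>y. (S y - fst y \<bullet> snd y) / dt)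
                        (scaleR (1/dt) (JmatT (\<Phi> x - x))) (I1 x + I2 (\<Phi> x))))))"
  proof (intro conjI allI impI ballI)
    fix x assume xK: "x \<in> K"
    have fe: "flow_exists F dt x" using K_inv xK dt0 dtT unfolding F_def by (auto intro: less_imp_le)
    obtain z Ms where z: "sol (\<lambda>_. F) dt z" "z 0 = x" and fz: "\<forall>s\<in>{0..dt}. flow F s x = z s"
      and der: "\<forall>s\<in>{0..dt}. (flow F s has_derivative Ms s) (at x) \<and> bounded_linear (Ms s)"
      and var: "\<forall>h. sol (\<lambda>s v. DF (z s) v) dt (\<lambda>s. Ms s h) \<and> Ms 0 h = h"
      using c.flow_diff_full[OF fe] by blast
    have zK: "z r \<in> K" if r: "r \<in> {0..dt}" for r
    proof -
      have "ereal r \<le> ereal dt" using r by auto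
      then have "ereal r \<le> T" using dtT by (meson less_imp_le order_trans)
      then have "flow F r x \<in> K" using K_inv xK r unfolding F_def by auto
      then show ?thesis using fz r by auto
    qed
    define B where "B = (LK + ln 2 / dt) / 2"
    have B0: "B > 0" unfolding B_def using LK0 dt0 by (simp add: add_nonneg_pos)
    have BLK: "LK \<le> B" unfolding B_def using LKdt by (simp add: field_simps)
    have Bdt: "B * dt < ln 2"
    proof -
      have "B < ln 2 / dt" unfolding B_def using LKdt by (simp add: field_simps)
      then show ?thesis using dt0 by (simp add: field_simps)
    qed
    define c where "c = exp (B * dt) - 1"
    have c1: "c < 1" unfolding c_def using Bdt by (smt (verit) exp_less_cancel_iff exp_ln)
    have DFb: "\<forall>r\<in>{0..dt}. norm (DF (z r)) \<le> B"
    proof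
      fix r assume r: "r \<in> {0..dt}"
      have "norm (DF (z r)) \<le> norm (Hess (z r))" unfolding DF_def by (rule norm_Jl_comp)
      also have "\<dots> \<le> LK" using LK_ub zK r by auto
      finally show "norm (DF (z r)) \<le> B" using BLK by simp
    qed
    have close: "norm (Ms dt h - h) \<le> c * norm h" for h
    proof -
      have "norm (Ms dt h - Ms 0 h) \<le> (exp (B * dt) - 1) * norm (Ms 0 h)"
        by (rule var_close[where A="\<lambda>s. DF (z s)", OF _ B0 DFb]) (use var[rule_format, of h] dt0 in auto)
      then show ?thesis using var[rule_format, of h] unfolding c_def by simp
    qed
    have blM: "bounded_linear (Ms dt)" using der dt0 by auto
    have "bij (lower_block (Ms dt))"
    proof (rule lower_block_bij[OF blM])
      fix v :: "real^'n" assume v: "snd (Ms dt (0, v)) = 0"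
      have "norm v = norm (snd (Ms dt (0, v) - (0, v)))" using v by simp
      also have "\<dots> \<le> norm (Ms dt (0, v) - (0, v))"
        by (rule norm_snd_le')
      also have "\<dots> \<le> c * norm ((0::real^'n, v))" by (rule close)
      also have "\<dots> = c * norm v" by (simp add: norm_prod_def)
      finally have "(1 - c) * norm v \<le> 0" by (simp add: algebra_simps)
      then have "norm v \<le> 0" using c1 by (simp add: mult_le_0_iff)
      then show "v = 0" by simp
    qed
    then show "lower_block_invertible_at (flow (ham_vf gH) dt) x"
      unfolding lower_block_invertible_at_def using der dt0 unfolding F_def by auto
  next
    fix U assume U: "qP_chart (ham_vf gH) dt U \<and> U \<inter> K \<noteq> {} \<and> simply_connected (qP_map (flow (ham_vf gH) dt) ` U)"
    show "let \<Phi> = flow (ham_vf gH) dt; \<psi> = qP_map \<Phi>; W = \<psi> ` U in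
          (\<forall>x\<in>U. lower_block_invertible_at \<Phi> x) \<and>
          diffeo_on U W \<psi> \<and> open W \<and> simply_connected W \<and>
          (\<exists>S :: 'n phase \<Rightarrow> real.
             (\<forall>y\<in>W. has_gradient S (snd (inv_into U \<psi> y), fst (\<Phi> (inv_into U \<psi> y))) y) \<and>
             (\<forall>x\<in>U. has_gradient (\<lambda>y. (S y - fst y \<bullet> snd y) / dt)
                        (scaleR (1/dt) (JmatT (\<Phi> x - x))) (I1 x + I2 (\<Phi> x))))"
    proof -
      define \<Phi> where "\<Phi> = flow F dt"
      define \<psi> where "\<psi> = qP_map \<Phi>"
      define W where "W = \<psi> ` U"
      define \<iota> where "\<iota> = inv_into U \<psi>"
      have ch: "qP_chart F dt U" using U F_def by simp
      have oU: "open U" and feU: "\<forall>x\<in>U. flow_exists F dt x" and oW: "open W" and dif: "diffeo_on U W \<psi>"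
        using ch unfolding qP_chart_def \<psi>_def \<Phi>_def W_def by auto
      have sc: "simply_connected W" using U unfolding W_def \<psi>_def \<Phi>_def F_def by simp
      have injU: "inj_on \<psi> U" and \<iota>d: "\<iota> differentiable_on W" using dif unfolding diffeo_on_def \<iota>_def by auto
      define A where "A x' = integral {0..dt} (\<lambda>r. lag H gH (flow F r x'))" for x'
      have pt: "\<exists>Mx N. (\<Phi> has_derivative Mx) (at x) \<and> bounded_linear Mx \<and> (\<iota> has_derivative N) (at (\<psi> x)) \<and>
           bounded_linear N \<and> (\<forall>h. N (fst h, snd (Mx h)) = h) \<and> (\<forall>k. (fst (N k), snd (Mx (N k))) = k) \<and>
           (A has_derivative (\<lambda>h. snd (\<Phi> x) \<bullet> fst (Mx h) - snd x \<bullet> fst h)) (at x)" if x: "x \<in> U" for x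
      proof -
        obtain Mx where Md: "(\<Phi> has_derivative Mx) (at x)"
          and Ad: "(A has_derivative (\<lambda>h. snd (\<Phi> x) \<bullet> fst (Mx h) - snd x \<bullet> fst h)) (at x)"
          using action_deriv[OF H_grad gH_deriv Hess_cont, of dt x] feU x unfolding F_def \<Phi>_def A_def by auto
        have blM: "bounded_linear Mx" using Md has_derivative_bounded_linear by blast
        define D\<psi> where "D\<psi> h = (fst h, snd (Mx h))" for h
        have \<psi>d: "(\<psi> has_derivative D\<psi>) (at x)" unfolding \<psi>_def qP_map_def[abs_def] D\<psi>_def
          by (intro has_derivative_Pair has_derivative_fst has_derivative_snd has_derivative_ident Md)
        have yW: "\<psi> x \<in> W" using x W_def by auto
        have \<iota>x: "\<iota> (\<psi> x) = x" using inv_into_f_f[OF injU x] \<iota>_def by simp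
        obtain N where Nd: "(\<iota> has_derivative N) (at (\<psi> x))"
          using \<iota>d yW unfolding differentiable_on_eq_differentiable_at[OF oW] differentiable_def by blast
        have blN: "bounded_linear N" using Nd has_derivative_bounded_linear by blast
        have c1: "((\<iota> \<circ> \<psi>) has_derivative (N \<circ> D\<psi>)) (at x)" using diff_chain_at[OF \<psi>d Nd] .
        have c2: "((\<iota> \<circ> \<psi>) has_derivative (\<lambda>h. h)) (at x)"
          by (rule has_derivative_transform_within_open[OF has_derivative_ident oU x])
             (use injU in \<open>auto simp: \<iota>_def\<close>)
        have e1: "N \<circ> D\<psi> = (\<lambda>h. h)" using has_derivative_unique[OF c1 c2] .
        have \<psi>d': "(\<psi> has_derivative D\<psi>) (at (\<iota> (\<psi> x)))" using \<psi>d \<iota>x by simp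
        have c3: "((\<psi> \<circ> \<iota>) has_derivative (D\<psi> \<circ> N)) (at (\<psi> x))" using diff_chain_at[OF Nd \<psi>d'] .
        have c4: "((\<psi> \<circ> \<iota>) has_derivative (\<lambda>h. h)) (at (\<psi> x))"
          by (rule has_derivative_transform_within_open[OF has_derivative_ident oW yW])
             (auto simp: \<iota>_def W_def f_inv_into_f)
        have e2: "D\<psi> \<circ> N = (\<lambda>h. h)" using has_derivative_unique[OF c3 c4] .
        show ?thesis
          apply (rule exI[of _ Mx], rule exI[of _ N])
          using Md blM Nd blN e1 e2 Ad unfolding D\<psi>_def by (auto simp: fun_eq_iff)
      qed
      have lbi: "lower_block_invertible_at \<Phi> x" if x: "x \<in> U" for x
      proof -
        obtain Mx N where Md: "(\<Phi> has_derivative Mx) (at x)" and blM: "bounded_linear Mx"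
          and blN: "bounded_linear N" and e1: "\<forall>h. N (fst h, snd (Mx h)) = h"
          using pt[OF x] by blast
        have "bij (lower_block Mx)"
        proof (rule lower_block_bij[OF blM])
          fix v :: "real^'n" assume v: "snd (Mx (0, v)) = 0"
          have "(0, v) = N (fst (0::real^'n, v), snd (Mx (0, v)))" using e1 by metis
          also have "\<dots> = N 0" using v by (simp add: zero_prod_def)
          also have "\<dots> = 0" using blN by (simp add: linear_simps)
          finally show "v = 0" by (simp add: zero_prod_def)
        qed
        then show ?thesis unfolding lower_block_invertible_at_def using Md by blast
      qed
      define G where "G x = snd (\<Phi> x) \<bullet> fst (\<Phi> x) - A x" for x
      define S where "S y = G (\<iota> y)" for y
      have Sd: "(S has_derivative (\<lambda>k. (snd (\<iota> y), fst (\<Phi> (\<iota> y))) \<bullet> k)) (at y)" if y: "y \<in> W" for y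
      proof -
        define x where "x = \<iota> y"
        have x: "x \<in> U" using y unfolding x_def \<iota>_def W_def by (auto intro: inv_into_into)
        have \<psi>x: "\<psi> x = y" using y unfolding x_def \<iota>_def W_def by (auto simp: f_inv_into_f)
        obtain Mx N where Md: "(\<Phi> has_derivative Mx) (at x)" and Nd: "(\<iota> has_derivative N) (at y)"
          and e2: "\<forall>k. (fst (N k), snd (Mx (N k))) = k"
          and Ad: "(A has_derivative (\<lambda>h. snd (\<Phi> x) \<bullet> fst (Mx h) - snd x \<bullet> fst h)) (at x)"
          using pt[OF x] \<psi>x by blast
        have d1: "((\<lambda>x. snd (\<Phi> x)) has_derivative (\<lambda>h. snd (Mx h))) (at x)" using has_derivative_snd[OF Md] .
        have d2: "((\<lambda>x. fst (\<Phi> x)) has_derivative (\<lambda>h. fst (Mx h))) (at x)" using has_derivative_fst[OF Md] .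
        have d3: "((\<lambda>x. snd (\<Phi> x) \<bullet> fst (\<Phi> x)) has_derivative (\<lambda>h. snd (\<Phi> x) \<bullet> fst (Mx h) + snd (Mx h) \<bullet> fst (\<Phi> x))) (at x)"
          using has_derivative_inner[OF d1 d2] .
        have Gd: "(G has_derivative (\<lambda>h. (snd (\<Phi> x) \<bullet> fst (Mx h) + snd (Mx h) \<bullet> fst (\<Phi> x)) - (snd (\<Phi> x) \<bullet> fst (Mx h) - snd x \<bullet> fst h))) (at x)"
          unfolding G_def[abs_def] using has_derivative_diff[OF d3 Ad] .
        have "((G \<circ> \<iota>) has_derivative ((\<lambda>h. (snd (\<Phi> x) \<bullet> fst (Mx h) + snd (Mx h) \<bullet> fst (\<Phi> x)) - (snd (\<Phi> x) \<bullet> fst (Mx h) - snd x \<bullet> fst h)) \<circ> N)) (at y)"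
          using diff_chain_at[OF Nd Gd[unfolded x_def]] unfolding x_def .
        moreover have "((\<lambda>h. (snd (\<Phi> x) \<bullet> fst (Mx h) + snd (Mx h) \<bullet> fst (\<Phi> x)) - (snd (\<Phi> x) \<bullet> fst (Mx h) - snd x \<bullet> fst h)) \<circ> N)
            = (\<lambda>k. (snd x, fst (\<Phi> x)) \<bullet> k)"
        proof
          fix k
          have "fst (N k) = fst k" "snd (Mx (N k)) = snd k" using e2[rule_format, of k] by (metis fst_conv snd_conv)+
          then show "((\<lambda>h. (snd (\<Phi> x) \<bullet> fst (Mx h) + snd (Mx h) \<bullet> fst (\<Phi> x)) - (snd (\<Phi> x) \<bullet> fst (Mx h) - snd x \<bullet> fst h)) \<circ> N) k
            = (snd x, fst (\<Phi> x)) \<bullet> k"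
            by (simp add: inner_prod_def inner_commute)
        qed
        ultimately show ?thesis unfolding S_def[abs_def] x_def by (simp add: o_def)
      qed
      have g1: "\<forall>y\<in>W. has_gradient S (snd (\<iota> y), fst (\<Phi> (\<iota> y))) y"
        using Sd unfolding has_gradient_def by blast
      have g2: "has_gradient (\<lambda>y. (S y - fst y \<bullet> snd y) / dt) (scaleR (1/dt) (JmatT (\<Phi> x - x))) (I1 x + I2 (\<Phi> x))"
        if x: "x \<in> U" for x
      proof -
        define y where "y = I1 x + I2 (\<Phi> x)"
        have y\<psi>: "y = \<psi> x" unfolding y_def I1_def I2_def \<psi>_def qP_map_def by simp
        have yW: "y \<in> W" using x y\<psi> W_def by auto
        have \<iota>y: "\<iota> y = x" using inv_into_f_f[OF injU x] \<iota>_def y\<psi> by simp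
        have Sdy: "(S has_derivative (\<lambda>k. (snd x, fst (\<Phi> x)) \<bullet> k)) (at y)" using Sd[OF yW] \<iota>y by simp
        have D1: "((\<lambda>y. (S y - fst y \<bullet> snd y) / dt) has_derivative
            (\<lambda>k. ((snd x, fst (\<Phi> x)) \<bullet> k - (fst y \<bullet> snd k + fst k \<bullet> snd y)) / dt)) (at y)"
        proof -
          have d: "((\<lambda>y. S y - fst y \<bullet> snd y) has_derivative
              (\<lambda>k. (snd x, fst (\<Phi> x)) \<bullet> k - (fst y \<bullet> snd k + fst k \<bullet> snd y))) (at y)"
            using has_derivative_diff[OF Sdy has_derivative_inner[OF has_derivative_fst[OF has_derivative_ident] has_derivative_snd[OF has_derivative_ident]]] .
          show ?thesis using bounded_linear.has_derivative[OF bounded_linear_divide[of dt] d] .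
        qed
        have E1: "(\<lambda>k. ((snd x, fst (\<Phi> x)) \<bullet> k - (fst y \<bullet> snd k + fst k \<bullet> snd y)) / dt)
            = (\<lambda>k. (scaleR (1/dt) (JmatT (\<Phi> x - x))) \<bullet> k)"
        proof
          fix k
          have "(snd x, fst (\<Phi> x)) \<bullet> k - (fst y \<bullet> snd k + fst k \<bullet> snd y) = JmatT (\<Phi> x - x) \<bullet> k"
            unfolding y\<psi> \<psi>_def qP_map_def JmatT_def
            by (simp add: inner_prod_def inner_diff_left inner_diff_right inner_commute algebra_simps)
          then show "((snd x, fst (\<Phi> x)) \<bullet> k - (fst y \<bullet> snd k + fst k \<bullet> snd y)) / dt = (scaleR (1/dt) (JmatT (\<Phi> x - x))) \<bullet> k"
            by simp
        qed
        have D: "((\<lambda>y. (S y - fst y \<bullet> snd y) / dt) has_derivative (\<lambda>k. (scaleR (1/dt) (JmatT (\<Phi> x - x))) \<bullet> k)) (at y)"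
          using D1 unfolding E1 .
        show ?thesis unfolding has_gradient_def y_def[symmetric] by (rule D)
      qed
      have main: "(\<forall>x\<in>U. lower_block_invertible_at \<Phi> x) \<and> diffeo_on U W \<psi> \<and> open W \<and> simply_connected W \<and>
          (\<exists>S :: 'n phase \<Rightarrow> real.
             (\<forall>y\<in>W. has_gradient S (snd (\<iota> y), fst (\<Phi> (\<iota> y))) y) \<and>
             (\<forall>x\<in>U. has_gradient (\<lambda>y. (S y - fst y \<bullet> snd y) / dt)
                        (scaleR (1/dt) (JmatT (\<Phi> x - x))) (I1 x + I2 (\<Phi> x))))"
        using lbi dif oW sc g1 g2 by blast
      then show ?thesis unfolding Let_def \<Phi>_def \<psi>_def W_def \<iota>_def F_def by blast
    qed
  qed
qed

end
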